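(* Let $d_1,d_2\in\mathbb{Z}$ with $d_2>d_1\ge0$, and let $f(z)=z^{d_1}$, $z\in\mathbb{S}^1$. Then $|f-g|_{H^{1/2}}^2\ge4\pi^2(d_2-d_1)$ for all $g\in\mathcal{E}_{d_2}$.
   Context: $\mathbb{S}^1\subset\mathbb{C}$ with arclength measure. $H^{1/2}(\mathbb{S}^1;\mathbb{S}^1)=\{g\in H^{1/2}(\mathbb{S}^1;\mathbb{C}):|g|=1\text{ a.e.}\}$; such maps have a well-defined degree (the unique extension of the degree of smooth maps continuous in $H^{1/2}$). $\mathcal{E}_d=\{g\in H^{1/2}(\mathbb{S}^1;\mathbb{S}^1):\deg g=d\}$. $|h|_{H^{1/2}}^2=\int_{\mathbb{S}^1}\int_{\mathbb{S}^1}\frac{|h(x)-h(y)|^2}{|x-y|^2}dx\,dy$ with $|x-y|$ the Euclidean distance in $\mathbb{R}^2$. *)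

theory Defs
  imports "HOL-Analysis.Analysis" "HOL-Complex_Analysis.Complex_Analysis"
begin

text \<open>Maps on the unit circle are represented as functions complex => complex, of which only
the values on the unit circle matter. The circle is parametrised by cis t, t in [0, 2 pi];
arclength measure on S^1 is the image of Lebesgue measure on [0, 2 pi] under cis.\<close>

definition H12_sq :: "(complex \<Rightarrow> complex) \<Rightarrow> ennreal" where
  "H12_sq h =
     (\<integral>\<^sup>+ x. (\<integral>\<^sup>+ y. ennreal ((cmod (h (cis x) - h (cis y)))\<^sup>2 / (cmod (cis x - cis y))\<^sup>2)
                  * indicator {0..2*pi} y \<partial>lborel) * indicator {0..2*pi} x \<partial>lborel)"

definition L2_sq :: "(complex \<Rightarrow> complex) \<Rightarrow> ennreal" where
  "L2_sq h = (\<integral>\<^sup>+ x. ennreal ((cmod (h (cis x)))\<^sup>2) * indicator {0..2*pi} x \<partial>lborel)"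

definition in_H12 :: "(complex \<Rightarrow> complex) \<Rightarrow> bool" where
  "in_H12 h \<longleftrightarrow> (\<lambda>x. h (cis x)) \<in> borel_measurable lborel \<and> L2_sq h < \<infinity> \<and> H12_sq h < \<infinity>"

definition in_H12_S1 :: "(complex \<Rightarrow> complex) \<Rightarrow> bool" where
  "in_H12_S1 g \<longleftrightarrow> in_H12 g \<and> (AE x in lborel. x \<in> {0..2*pi} \<longrightarrow> cmod (g (cis x)) = 1)"

definition smooth_real :: "(real \<Rightarrow> complex) \<Rightarrow> bool" where
  "smooth_real F \<longleftrightarrow> (\<exists>D :: nat \<Rightarrow> real \<Rightarrow> complex. D 0 = F \<and>
      (\<forall>n t. (D n has_vector_derivative D (Suc n) t) (at t)))"

definition smooth_S1_map :: "(complex \<Rightarrow> complex) \<Rightarrow> bool" where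
  "smooth_S1_map u \<longleftrightarrow> smooth_real (\<lambda>t. u (cis t)) \<and> (\<forall>t. cmod (u (cis t)) = 1)"

definition smooth_degree :: "(complex \<Rightarrow> complex) \<Rightarrow> complex" where
  "smooth_degree u = winding_number (\<lambda>t. u (cis (2*pi*t))) 0"

text \<open>Degree of H^{1/2}(S^1;S^1) maps: the extension of the smooth degree, continuous in H^{1/2}
(smooth S^1-valued maps are dense, so g has degree d iff it is the H^{1/2}-limit of smooth
maps of degree d).\<close>
definition H12_degree :: "(complex \<Rightarrow> complex) \<Rightarrow> int \<Rightarrow> bool" where
  "H12_degree g d \<longleftrightarrow> (\<exists>v :: nat \<Rightarrow> complex \<Rightarrow> complex.
      (\<forall>n. smooth_S1_map (v n) \<and> smooth_degree (v n) = of_int d) \<and>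
      (\<lambda>n. L2_sq (\<lambda>z. v n z - g z)) \<longlonglongrightarrow> 0 \<and>
      (\<lambda>n. H12_sq (\<lambda>z. v n z - g z)) \<longlonglongrightarrow> 0)"

definition E_deg :: "int \<Rightarrow> (complex \<Rightarrow> complex) set" where
  "E_deg d = {g. in_H12_S1 g \<and> H12_degree g d}"

end

theory Submission
  imports Defs
begin

definition E :: "int \<Rightarrow> real \<Rightarrow> complex" where "E n t = cis (of_int n * t)"

lemma E_mult: "E m t * E n t = E (m + n) t"
  by (simp add: E_def cis_mult algebra_simps)
lemma E_cnj: "cnj (E n t) = E (-n) t"
  by (simp add: E_def cis_cnj)
lemma norm_E [simp]: "norm (E n t) = 1"
  by (simp add: E_def)
lemma E_0 [simp]: "E 0 t = 1"
  by (simp add: E_def)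
lemma E_period: "E n (t + 2*pi) = E n t"
proof -
  have "E n (t + 2*pi) = E n t * cis (2 * pi * of_int n)"
    by (simp add: E_def cis_mult algebra_simps)
  also have "cis (2 * pi * of_int n) = 1" by (rule cis_multiple_2pi) simp
  finally show ?thesis by simp
qed
lemma E_2pi: "E n (2*pi) = 1"
  using E_period[of n 0] by (simp add: E_def)

lemma E_deriv: "((E n) has_vector_derivative (\<i> * of_int n * E n t)) (at t within A)"
  unfolding E_def has_vector_derivative_def
  by (rule derivative_eq_intros refl | simp add: algebra_simps fun_eq_iff scaleR_conv_of_real)+

lemma continuous_on_E [continuous_intros]: "continuous_on A (E n)"
  unfolding E_def by (intro continuous_intros)

lemma integral_E: "(E n has_integral (if n = 0 then 2*pi else 0)) {0..2*pi}"
proof (cases "n = 0")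
  case True
  have "E 0 = (\<lambda>_. 1)" by (auto simp: E_def)
  then show ?thesis using True has_integral_const_real[of "1::complex" 0 "2*pi"]
    by (simp add: scaleR_conv_of_real)
next
  case False
  have "((\<lambda>t. E n t / (\<i> * of_int n)) has_vector_derivative E n t) (at t within {0..2*pi})" for t
    using has_vector_derivative_divide[OF E_deriv[of n t "{0..2*pi}"], of "\<i> * of_int n"] False
    by simp
  then have "(E n has_integral (E n (2*pi) / (\<i> * of_int n) - E n 0 / (\<i> * of_int n))) {0..2*pi}"
    by (intro fundamental_theorem_of_calculus) auto
  moreover have "E n 0 = 1" by (simp add: E_def)
  ultimately show ?thesis using False by (simp add: E_2pi)
qed

definition fc :: "(real \<Rightarrow> complex) \<Rightarrow> int \<Rightarrow> complex" where
  "fc U n = integral {0..2*pi} (\<lambda>t. U t * E (-n) t) / (2*pi)"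

lemma integrable_cont: "continuous_on {0..2*pi} (f :: real \<Rightarrow> complex) \<Longrightarrow> f integrable_on {0..2*pi}"
  by (rule integrable_continuous_real)
lemma integrable_cont_real: "continuous_on {0..2*pi} (f :: real \<Rightarrow> real) \<Longrightarrow> f integrable_on {0..2*pi}"
  by (rule integrable_continuous_real)

lemma int_E: "integral {0..2*pi} (E n) = (if n = 0 then 2*pi else 0)"
  using integral_E by (rule integral_unique)

lemma int_mult_cnj_trig:
  assumes "finite A" "continuous_on {0..2*pi} U"
  shows "integral {0..2*pi} (\<lambda>t. U t * cnj (\<Sum>n\<in>A. a n * E n t))
         = 2*pi * (\<Sum>n\<in>A. cnj (a n) * fc U n)"
proof -
  have "(\<lambda>t. U t * cnj (\<Sum>n\<in>A. a n * E n t)) = (\<lambda>t. \<Sum>n\<in>A. cnj (a n) * (U t * E (-n) t))"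
    by (auto simp: fun_eq_iff sum_distrib_left E_cnj algebra_simps)
  then have "integral {0..2*pi} (\<lambda>t. U t * cnj (\<Sum>n\<in>A. a n * E n t))
      = (\<Sum>n\<in>A. integral {0..2*pi} (\<lambda>t. cnj (a n) * (U t * E (-n) t)))"
    using assms by (simp add: integral_sum integrable_cont continuous_intros)
  also have "\<dots> = (\<Sum>n\<in>A. cnj (a n) * (2*pi * fc U n))"
    by (simp add: fc_def)
  finally show ?thesis by (simp add: sum_distrib_left algebra_simps)
qed

lemma fc_trig:
  assumes "finite A"
  shows "fc (\<lambda>t. \<Sum>n\<in>A. a n * E n t) m = (if m \<in> A then a m else 0)"
proof -
  have "(\<lambda>t. (\<Sum>n\<in>A. a n * E n t) * E (-m) t) = (\<lambda>t. \<Sum>n\<in>A. a n * E (n - m) t)"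
    by (auto simp: fun_eq_iff sum_distrib_right E_mult mult.assoc)
  then have "integral {0..2*pi} (\<lambda>t. (\<Sum>n\<in>A. a n * E n t) * E (-m) t)
      = (\<Sum>n\<in>A. integral {0..2*pi} (\<lambda>t. a n * E (n - m) t))"
    using assms by (simp add: integral_sum integrable_cont continuous_intros)
  also have "\<dots> = (\<Sum>n\<in>A. a n * (if n = m then 2*pi else 0))"
    by (simp add: int_E)
  also have "\<dots> = (\<Sum>n\<in>A. if n = m then a m * 2 * pi else 0)"
    by (rule sum.cong) auto
  also have "\<dots> = (if m \<in> A then a m * 2 * pi else 0)"
    using assms by (simp add: sum.delta')
  finally show ?thesis by (simp add: fc_def)
qed

lemma parseval_trig:
  assumes "finite A"
  shows "integral {0..2*pi} (\<lambda>t. (\<Sum>n\<in>A. a n * E n t) * cnj (\<Sum>n\<in>A. a n * E n t))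
       = of_real (2*pi * (\<Sum>n\<in>A. (cmod (a n))\<^sup>2))"
proof -
  have "integral {0..2*pi} (\<lambda>t. (\<Sum>n\<in>A. a n * E n t) * cnj (\<Sum>n\<in>A. a n * E n t))
     = 2*pi * (\<Sum>n\<in>A. cnj (a n) * a n)"
    using int_mult_cnj_trig[OF assms, of "\<lambda>t. \<Sum>n\<in>A. a n * E n t" a]
    by (simp add: continuous_intros fc_trig assms cong: sum.cong)
  also have "\<dots> = of_real (2*pi * (\<Sum>n\<in>A. (cmod (a n))\<^sup>2))"
    unfolding of_real_mult of_real_sum by (simp add: complex_norm_square mult.commute del: of_real_power)
  finally show ?thesis .
qed

definition psum :: "(int \<Rightarrow> complex) \<Rightarrow> nat \<Rightarrow> real \<Rightarrow> complex" where
  "psum a N t = (\<Sum>n\<in>{-int N..int N}. a n * E n t)"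

definition T :: "(int \<Rightarrow> complex) \<Rightarrow> nat \<Rightarrow> real \<Rightarrow> complex" where
  "T a k t = (if k = 0 then a 0 else a (int k) * E (int k) t + a (- int k) * E (- int k) t)"

lemma sym_interval_Suc:
  "{- int (Suc N)..int (Suc N)} = insert (int (Suc N)) (insert (- int (Suc N)) {-int N..int N})"
  by auto

lemma sym_sum_Suc:
  "(\<Sum>n\<in>{- int (Suc N)..int (Suc N)}. f n) = f (int (Suc N)) + f (- int (Suc N)) + (\<Sum>n\<in>{-int N..int N}. f n)"
  unfolding sym_interval_Suc by (simp add: algebra_simps)

lemma psum_T: "psum a N t = (\<Sum>k<Suc N. T a k t)"
proof (induction N)
  case 0 then show ?case by (simp add: psum_def T_def)
next
  case (Suc N)
  have "psum a (Suc N) t = T a (Suc N) t + psum a N t"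
    unfolding psum_def T_def sym_sum_Suc by simp
  also have "\<dots> = (\<Sum>k<Suc (Suc N). T a k t)"
    by (simp only: Suc.IH sum.lessThan_Suc[of _ "Suc N"] add.commute)
  finally show ?case .
qed

lemma continuous_psum [continuous_intros]: "continuous_on A (psum a N)"
  unfolding psum_def by (intro continuous_intros)

definition ssum :: "(int \<Rightarrow> complex) \<Rightarrow> real \<Rightarrow> complex" where
  "ssum a t = (\<Sum>k. T a k t)"

definition abssum :: "(int \<Rightarrow> complex) \<Rightarrow> bool" where
  "abssum a \<longleftrightarrow> summable (\<lambda>k::nat. cmod (a (int k)) + cmod (a (- int k)))"

lemma psum_ulim:
  assumes "abssum a"
  shows "uniform_limit UNIV (psum a) (ssum a) sequentially"
proof -
  have "uniform_limit UNIV (\<lambda>n x. \<Sum>i<n. T a i x) (\<lambda>x. suminf (\<lambda>i. T a i x)) sequentially"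
  proof (rule Weierstrass_m_test)
    fix n :: nat and x :: real
    show "norm (T a n x) \<le> cmod (a (int n)) + cmod (a (- int n))"
      by (auto simp: T_def norm_mult intro!: order.trans[OF norm_triangle_ineq])
  qed (use assms in \<open>simp add: abssum_def\<close>)
  then have "uniform_limit UNIV (\<lambda>n x. \<Sum>i<Suc n. T a i x) (\<lambda>x. suminf (\<lambda>i. T a i x)) sequentially"
    by (subst filterlim_sequentially_Suc)
  moreover have "psum a = (\<lambda>n x. \<Sum>i<Suc n. T a i x)" by (intro ext) (rule psum_T)
  moreover have "ssum a = (\<lambda>x. suminf (\<lambda>i. T a i x))" by (simp add: ssum_def fun_eq_iff)
  ultimately show ?thesis by (simp only:)
qed

lemma continuous_ssum: "abssum a \<Longrightarrow> continuous_on A (ssum a)"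
  by (rule uniform_limit_theorem[OF _ uniform_limit_on_subset[OF psum_ulim]])
     (auto intro: continuous_intros always_eventually)

lemma bounded_cont: "continuous_on {0..2*pi} (U :: real \<Rightarrow> complex) \<Longrightarrow> bounded (U ` {0..2*pi})"
  by (intro compact_imp_bounded compact_continuous_image) auto

lemma lim_int:
  fixes P :: "nat \<Rightarrow> real \<Rightarrow> complex"
  assumes ul: "uniform_limit {0..2*pi} P G sequentially"
    and cP: "\<And>N. continuous_on {0..2*pi} (P N)"
    and cG: "continuous_on {0..2*pi} G"
    and cU: "continuous_on {0..2*pi} U"
  shows "(\<lambda>N. integral {0..2*pi} (\<lambda>t. U t * P N t)) \<longlonglongrightarrow> integral {0..2*pi} (\<lambda>t. U t * G t)"
proof -
  have ul2: "uniform_limit {0..2*pi} (\<lambda>N t. U t * P N t) (\<lambda>t. U t * G t) sequentially"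
    by (intro uniform_lim_mult uniform_limit_const ul bounded_cont cU cG)
  have c2: "\<And>n. continuous_on {0..2*pi} (\<lambda>t. U t * P n t)"
    using cP cU by (auto intro: continuous_intros)
  obtain I J where
    "\<And>n. ((\<lambda>t. U t * P n t) has_integral I n) {0..2*pi}"
    "((\<lambda>t. U t * G t) has_integral J) {0..2*pi}" "I \<longlonglongrightarrow> J"
    by (rule uniform_limit_integral[where F=sequentially, OF ul2 c2]) auto
  note h = this
  have "(\<lambda>N. integral {0..2*pi} (\<lambda>t. U t * P N t)) = I"
    using h(1) by (auto simp: fun_eq_iff intro: integral_unique)
  moreover have "integral {0..2*pi} (\<lambda>t. U t * G t) = J"
    using h(2) by (rule integral_unique)
  ultimately show ?thesis using h(3) by simp
qed

lemma fc_psum: "nat \<bar>m\<bar> \<le> N \<Longrightarrow> fc (psum a N) m = a m"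
  unfolding psum_def[abs_def] by (subst fc_trig) auto

lemma fc_ssum:
  assumes "abssum a"
  shows "fc (ssum a) m = a m"
proof -
  have "(\<lambda>N. integral {0..2*pi} (\<lambda>t. E (-m) t * psum a N t))
        \<longlonglongrightarrow> integral {0..2*pi} (\<lambda>t. E (-m) t * ssum a t)"
    by (rule lim_int[OF uniform_limit_on_subset[OF psum_ulim[OF assms]]])
       (auto intro: continuous_intros continuous_ssum assms)
  moreover have "eventually (\<lambda>N. integral {0..2*pi} (\<lambda>t. E (-m) t * psum a N t) = 2*pi * a m) sequentially"
  proof (rule eventually_sequentiallyI[of "nat \<bar>m\<bar>"])
    fix N assume "nat \<bar>m\<bar> \<le> N"
    then have "fc (psum a N) m = a m" by (rule fc_psum)
    then show "integral {0..2*pi} (\<lambda>t. E (-m) t * psum a N t) = 2*pi * a m"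
      by (simp add: fc_def mult.commute field_simps)
  qed
  then have "(\<lambda>N. integral {0..2*pi} (\<lambda>t. E (-m) t * psum a N t)) \<longlonglongrightarrow> 2*pi * a m"
    by (rule tendsto_eventually)
  ultimately have "integral {0..2*pi} (\<lambda>t. E (-m) t * ssum a t) = 2*pi * a m"
    by (rule LIMSEQ_unique)
  then show ?thesis by (simp add: fc_def mult.commute)
qed

lemma ulim_cnj:
  "uniform_limit S P G F \<Longrightarrow> uniform_limit S (\<lambda>N t. cnj (P N t)) (\<lambda>t. cnj (G t)) F"
  by (rule bounded_linear.uniform_limit[OF bounded_linear_cnj])

lemma lim_int_cnj:
  assumes "abssum a" "continuous_on {0..2*pi} U"
  shows "(\<lambda>N. 2*pi * (\<Sum>n\<in>{-int N..int N}. cnj (a n) * fc U n))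
           \<longlonglongrightarrow> integral {0..2*pi} (\<lambda>t. U t * cnj (ssum a t))"
proof -
  have "(\<lambda>N. integral {0..2*pi} (\<lambda>t. U t * cnj (psum a N t)))
           \<longlonglongrightarrow> integral {0..2*pi} (\<lambda>t. U t * cnj (ssum a t))"
    by (rule lim_int[OF ulim_cnj[OF uniform_limit_on_subset[OF psum_ulim[OF assms(1)]]]])
       (auto intro!: continuous_intros continuous_ssum assms)
  moreover have "integral {0..2*pi} (\<lambda>t. U t * cnj (psum a N t)) =
        2*pi * (\<Sum>n\<in>{-int N..int N}. cnj (a n) * fc U n)" for N
    unfolding psum_def by (rule int_mult_cnj_trig) (auto simp: assms)
  ultimately show ?thesis by simp
qed

lemma cis_eq_02pi:
  assumes "s \<in> {0..2*pi}" "t \<in> {0..2*pi}" "cis s = cis t"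
  shows "s = t \<or> (s = 0 \<and> t = 2*pi) \<or> (s = 2*pi \<and> t = 0)"
proof -
  from assms(3) have "exp (\<i> * of_real s) = exp (\<i> * of_real t)" by (simp add: cis_conv_exp)
  then obtain n :: int where "\<i> * of_real s = \<i> * of_real t + (of_int (2 * n) * pi) * \<i>"
    by (auto simp: exp_eq)
  then have "Im (\<i> * of_real s) = Im (\<i> * of_real t + (of_int (2 * n) * pi) * \<i>)" by simp
  then have st: "s = t + 2 * n * pi" by simp
  have "n \<ge> -1" "n \<le> 1"
  proof -
    have e: "pi * real_of_int n = (s - t) / 2" using st by (simp add: algebra_simps)
    have e1: "pi * (real_of_int n + 1) = (s - t) / 2 + pi" "pi * (1 - real_of_int n) = pi - (s - t) / 2"
      using e by (simp_all add: algebra_simps)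
    have "pi * (real_of_int n + 1) \<ge> 0" "pi * (1 - real_of_int n) \<ge> 0"
      unfolding e1 using assms(1,2) by (auto simp: field_simps)
    then have "real_of_int n + 1 \<ge> 0" "1 - real_of_int n \<ge> 0" using pi_gt_zero
      by (simp_all add: zero_le_mult_iff)
    then show "n \<ge> -1" "n \<le> 1" by linarith+
  qed
  then have "n = -1 \<or> n = 0 \<or> n = 1" by linarith
  then show ?thesis using st assms(1,2) by auto
qed

lemma cis_onto:
  assumes "norm z = 1"
  shows "\<exists>t\<in>{0..2*pi}. cis t = z"
proof -
  have "z \<noteq> 0" using assms by auto
  then have z: "cis (Arg z) = z" using assms cis_Arg[of z] by (simp add: sgn_div_norm)
  show ?thesis
  proof (cases "Arg z \<ge> 0")
    case True then show ?thesis using z Arg_le_pi[of z] by (intro bexI[of _ "Arg z"]) auto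
  next
    case False
    have "cis (Arg z + 2*pi) = z" using z by (simp add: cis_mult[symmetric])
    then show ?thesis using False mpi_less_Arg[of z] by (intro bexI[of _ "Arg z + 2*pi"]) auto
  qed
qed

lemma cis_image: "cis ` {0..2*pi} = sphere 0 1"
  apply (auto simp: image_iff)
  by (metis cis_onto)

definition lift :: "(real \<Rightarrow> complex) \<Rightarrow> complex \<Rightarrow> complex" where
  "lift H z = H (SOME t. t \<in> {0..2*pi} \<and> cis t = z)"

lemma lift_cis:
  assumes "H 0 = H (2*pi)" "t \<in> {0..2*pi}"
  shows "lift H (cis t) = H t"
proof -
  define s where "s = (SOME s. s \<in> {0..2*pi} \<and> cis s = cis t)"
  have "s \<in> {0..2*pi} \<and> cis s = cis t" unfolding s_def by (rule someI[of _ t]) (use assms in auto)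
  then have "s = t \<or> (s = 0 \<and> t = 2*pi) \<or> (s = 2*pi \<and> t = 0)"
    using cis_eq_02pi assms(2) by blast
  moreover have "lift H (cis t) = H s" by (simp only: lift_def s_def)
  ultimately show ?thesis using assms(1) by auto
qed

lemma continuous_lift:
  assumes "H 0 = H (2*pi)" "continuous_on {0..2*pi} H"
  shows "continuous_on (sphere 0 1) (lift H)"
proof -
  have q: "quotient_map (top_of_set {0..2*pi}) (top_of_set (sphere 0 1)) cis"
  proof (rule continuous_closed_imp_quotient_map)
    show "continuous_map (top_of_set {0..2*pi}) (top_of_set (sphere 0 1)) cis"
      using cis_image by (auto simp: continuous_map_in_subtopology continuous_intros)
    show "closed_map (top_of_set {0..2*pi}) (top_of_set (sphere 0 1)) cis"
      unfolding closed_map_def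
    proof (intro allI impI)
      fix U assume "closedin (top_of_set {0..2*pi}) U"
      then show "closedin (top_of_set (sphere 0 1)) (cis ` U)"
        by (rule Abstract_Topology_2.continuous_imp_closed_map) (auto intro: continuous_intros simp: cis_image)
    qed
    show "cis ` topspace (top_of_set {0..2*pi}) = topspace (top_of_set (sphere 0 1))"
      using cis_image by simp
  qed
  have "continuous_on {0..2*pi} (lift H \<circ> cis)"
    using assms(2) by (rule continuous_on_eq) (auto simp: lift_cis[OF assms(1)])
  then have "continuous_map (top_of_set {0..2*pi}) euclidean (lift H \<circ> cis)" by simp
  from continuous_compose_quotient_map[OF q this] show ?thesis by simp
qed

definition TR :: "(complex \<Rightarrow> complex) \<Rightarrow> bool" where
  "TR f \<longleftrightarrow> (\<exists>A b. finite A \<and> (\<forall>t. f (cis t) = (\<Sum>n\<in>A. b n * E n t)))"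

lemma TR_const: "TR (\<lambda>z. c)"
  unfolding TR_def by (rule exI[of _ "{0}"], rule exI[of _ "\<lambda>_. c"]) simp

lemma sum_extend:
  assumes "finite C" "A \<subseteq> C"
  shows "(\<Sum>n\<in>A. b n * E n t) = (\<Sum>n\<in>C. (if n \<in> A then b n else 0) * E n t)"
proof -
  have "(\<Sum>n\<in>C. (if n \<in> A then b n else 0) * E n t) = (\<Sum>n\<in>C. if n \<in> A then b n * E n t else 0)"
    by (rule sum.cong) auto
  also have "\<dots> = (\<Sum>n\<in>C \<inter> A. b n * E n t)" using assms by (simp add: sum.inter_restrict)
  also have "C \<inter> A = A" using assms by auto
  finally show ?thesis by simp
qed

lemma TR_add: "TR f \<Longrightarrow> TR g \<Longrightarrow> TR (\<lambda>z. f z + g z)"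
proof -
  assume "TR f" "TR g"
  from \<open>TR f\<close> obtain A b where A: "finite A" "\<And>t. f (cis t) = (\<Sum>n\<in>A. b n * E n t)"
    unfolding TR_def by blast
  from \<open>TR g\<close> obtain B c where B: "finite B" "\<And>t. g (cis t) = (\<Sum>n\<in>B. c n * E n t)"
    unfolding TR_def by blast
  have "f (cis t) + g (cis t) = (\<Sum>n\<in>A \<union> B. ((if n \<in> A then b n else 0) + (if n \<in> B then c n else 0)) * E n t)" for t
  proof -
    have e1: "(\<Sum>n\<in>A. b n * E n t) = (\<Sum>n\<in>A \<union> B. (if n \<in> A then b n else 0) * E n t)"
      by (rule sum_extend) (use A(1) B(1) in auto)
    have e2: "(\<Sum>n\<in>B. c n * E n t) = (\<Sum>n\<in>A \<union> B. (if n \<in> B then c n else 0) * E n t)"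
      by (rule sum_extend) (use A(1) B(1) in auto)
    show ?thesis unfolding A(2) B(2) e1 e2 by (simp only: sum.distrib[symmetric] distrib_right)
  qed
  then show ?thesis unfolding TR_def using A(1) B(1) by (intro exI[of _ "A \<union> B"]) auto
qed

lemma TR_mult: "TR f \<Longrightarrow> TR g \<Longrightarrow> TR (\<lambda>z. f z * g z)"
proof -
  assume "TR f" "TR g"
  from \<open>TR f\<close> obtain A b where A: "finite A" "\<And>t. f (cis t) = (\<Sum>n\<in>A. b n * E n t)"
    unfolding TR_def by blast
  from \<open>TR g\<close> obtain B c where B: "finite B" "\<And>t. g (cis t) = (\<Sum>n\<in>B. c n * E n t)"
    unfolding TR_def by blast
  let ?s = "\<lambda>p::int\<times>int. fst p + snd p"
  define d where "d k = (\<Sum>p\<in>{p. p \<in> A \<times> B \<and> ?s p = k}. b (fst p) * c (snd p))" for k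
  have "f (cis t) * g (cis t) = (\<Sum>k\<in>?s ` (A \<times> B). d k * E k t)" for t
  proof -
    have "f (cis t) * g (cis t) = (\<Sum>n\<in>A. \<Sum>m\<in>B. b n * c m * E (n + m) t)"
      unfolding A(2) B(2) sum_product by (simp add: E_mult[symmetric] algebra_simps)
    also have "\<dots> = (\<Sum>p\<in>A \<times> B. b (fst p) * c (snd p) * E (?s p) t)"
      by (simp add: sum.cartesian_product case_prod_beta)
    also have "\<dots> = (\<Sum>k\<in>?s ` (A \<times> B). \<Sum>p\<in>{p. p \<in> A \<times> B \<and> ?s p = k}. b (fst p) * c (snd p) * E (?s p) t)"
      by (rule sum.group[symmetric]) (use A(1) B(1) in auto)
    also have "\<dots> = (\<Sum>k\<in>?s ` (A \<times> B). d k * E k t)"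
      unfolding d_def sum_distrib_right by (intro sum.cong refl) auto
    finally show ?thesis .
  qed
  then show ?thesis unfolding TR_def using A(1) B(1) by (intro exI[of _ "?s ` (A \<times> B)"]) auto
qed

lemma TR_real_linear:
  assumes "bounded_linear (f :: complex \<Rightarrow> real)"
  shows "TR (\<lambda>z. of_real (f z))"
proof -
  interpret linear f using assms by (rule bounded_linear.linear)
  have fz: "f z = Re z * f 1 + Im z * f \<i>" for z
  proof -
    have "z = Re z *\<^sub>R 1 + Im z *\<^sub>R \<i>" by (simp add: complex_eq_iff)
    then have "f z = f (Re z *\<^sub>R 1 + Im z *\<^sub>R \<i>)" by simp
    also have "\<dots> = Re z * f 1 + Im z * f \<i>" by (simp only: add scale real_scaleR_def)
    finally show ?thesis .
  qed
  define b where "b n = (if n = 1 then (of_real (f 1) - \<i> * of_real (f \<i>)) / 2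
                         else (of_real (f 1) + \<i> * of_real (f \<i>)) / 2)" for n :: int
  have "of_real (f (cis t)) = (\<Sum>n\<in>{1, -1}. b n * E n t)" for t
  proof -
    have c: "E 1 t = cos t + \<i> * sin t" "E (-1) t = cos t - \<i> * sin t"
      by (simp_all add: E_def cis.ctr complex_eq_iff)
    have "(\<Sum>n\<in>{1, -1}. b n * E n t) = b 1 * E 1 t + b (-1) * E (-1) t" by simp
    also have "\<dots> = of_real (cos t * f 1 + sin t * f \<i>)"
      unfolding c b_def by (simp add: complex_eq_iff field_simps)
    finally show ?thesis unfolding fz[of "cis t"] by simp
  qed
  then show ?thesis unfolding TR_def by (intro exI[of _ "{1, -1}"] exI[of _ b]) auto
qed

lemma TR_real_poly:
  "real_polynomial_function (f :: complex \<Rightarrow> real) \<Longrightarrow> TR (\<lambda>z. of_real (f z))"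
proof (induction rule: real_polynomial_function.induct)
  case (linear f) then show ?case by (rule TR_real_linear)
next
  case (const c) then show ?case using TR_const[of "of_real c"] by simp
next
  case (add f g) then show ?case using TR_add by fastforce
next
  case (mult f g) then show ?case using TR_mult by fastforce
qed

lemma TR_poly:
  assumes "polynomial_function (g :: complex \<Rightarrow> complex)"
  shows "TR g"
proof -
  have "real_polynomial_function (Re \<circ> g)" "real_polynomial_function (Im \<circ> g)"
    using assms bounded_linear_Re bounded_linear_Im unfolding polynomial_function_def by auto
  then have "TR (\<lambda>z. of_real ((Re \<circ> g) z))" "TR (\<lambda>z. of_real ((Im \<circ> g) z))"
    using TR_real_poly by blast+
  then have "TR (\<lambda>z. of_real ((Re \<circ> g) z) + \<i> * of_real ((Im \<circ> g) z))"
    by (intro TR_add TR_mult TR_const)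
  moreover have "(\<lambda>z. of_real ((Re \<circ> g) z) + \<i> * of_real ((Im \<circ> g) z)) = g"
    by (auto simp: fun_eq_iff complex_eq_iff)
  ultimately show ?thesis by simp
qed

lemma fc_zero_imp_zero:
  assumes cH: "continuous_on {0..2*pi} H" and per: "H 0 = H (2*pi)"
    and z: "\<And>n. fc H n = 0" and t: "t \<in> {0..2*pi}"
  shows "H t = 0"
proof -
  obtain M where M: "\<And>s. s \<in> {0..2*pi} \<Longrightarrow> norm (H s) \<le> M"
    using bounded_cont[OF cH] unfolding bounded_iff by (meson imageI)
  have M0: "M \<ge> 0" by (rule order.trans[OF norm_ge_zero M[of 0]]) simp
  define I where "I = integral {0..2*pi} (\<lambda>s. H s * cnj (H s))"
  have bound: "norm I \<le> 2*pi * M * e" if e: "e > 0" for e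
  proof -
    obtain g where g: "polynomial_function g" "\<And>z. z \<in> sphere 0 1 \<Longrightarrow> norm (lift H z - g z) < e"
      using Stone_Weierstrass_polynomial_function[OF compact_sphere continuous_lift[OF per cH] e] by blast
    obtain A b where A: "finite A" "\<And>s. g (cis s) = (\<Sum>n\<in>A. b n * E n s)"
      using TR_poly[OF g(1)] unfolding TR_def by blast
    have cg: "continuous_on {0..2*pi} (\<lambda>s. g (cis s))"
      unfolding A(2) by (intro continuous_intros)
    have zero: "integral {0..2*pi} (\<lambda>s. H s * cnj (g (cis s))) = 0"
      unfolding A(2) int_mult_cnj_trig[OF A(1) cH] by (simp add: z)
    have "I = integral {0..2*pi} (\<lambda>s. H s * cnj (H s)) - integral {0..2*pi} (\<lambda>s. H s * cnj (g (cis s)))"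
      by (simp add: zero I_def)
    also have "\<dots> = integral {0..2*pi} (\<lambda>s. H s * cnj (H s - g (cis s)))"
    proof -
      have i1: "(\<lambda>s. H s * cnj (H s)) integrable_on {0..2*pi}"
        by (intro integrable_cont continuous_intros cH)
      have i2: "(\<lambda>s. H s * cnj (g (cis s))) integrable_on {0..2*pi}"
        by (intro integrable_cont continuous_intros cH cg)
      show ?thesis unfolding integral_diff[OF i1 i2, symmetric]
        by (simp add: algebra_simps)
    qed
    finally have Ieq: "I = integral {0..2*pi} (\<lambda>s. H s * cnj (H s - g (cis s)))" .
    have "norm I \<le> M * e * (2*pi - 0)"
      unfolding Ieq
    proof (rule integral_bound)
      show "continuous_on {0..2*pi} (\<lambda>s. H s * cnj (H s - g (cis s)))"
        by (intro continuous_intros cH cg)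
      fix s assume s: "s \<in> {0..2*pi}"
      have "norm (H s - g (cis s)) \<le> e"
        using g(2)[of "cis s"] lift_cis[OF per s] by simp
      then show "norm (H s * cnj (H s - g (cis s))) \<le> M * e"
        unfolding norm_mult complex_mod_cnj
        by (intro mult_mono M s) (auto simp: M0)
    qed simp
    then show ?thesis by (simp add: algebra_simps)
  qed
  have "norm I = 0"
  proof (rule ccontr)
    assume "norm I \<noteq> 0"
    then have pos: "norm I > 0" by simp
    define e where "e = norm I / (2*pi * (M + 1))"
    have e: "e > 0" unfolding e_def using pos M0 by (simp add: pi_gt_zero)
    have "norm I \<le> 2*pi * M * e" by (rule bound[OF e])
    also have "\<dots> < 2*pi * (M + 1) * e" using e by (simp add: pi_gt_zero)
    also have "\<dots> = norm I"
    proof -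
      have "2*pi * (M + 1) \<noteq> 0" using M0 pi_gt_zero by (smt (verit) mult_pos_pos)
      then show ?thesis unfolding e_def times_divide_eq_right by (rule nonzero_mult_div_cancel_left)
    qed
    finally show False by simp
  qed
  then have I0: "I = 0" by simp
  have "((\<lambda>s. (cmod (H s))\<^sup>2) has_integral 0) {0..2*pi}"
  proof -
    have ci: "continuous_on {0..2*pi} (\<lambda>s. (cmod (H s))\<^sup>2)" by (intro continuous_intros cH)
    then have hi: "((\<lambda>s. (cmod (H s))\<^sup>2) has_integral integral {0..2*pi} (\<lambda>s. (cmod (H s))\<^sup>2)) {0..2*pi}"
      by (intro integrable_integral integrable_cont_real)
    from has_integral_of_real[OF hi] have
      "((\<lambda>s. complex_of_real ((cmod (H s))\<^sup>2)) has_integral of_real (integral {0..2*pi} (\<lambda>s. (cmod (H s))\<^sup>2))) {0..2*pi}" .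
    moreover have "(\<lambda>s. complex_of_real ((cmod (H s))\<^sup>2)) = (\<lambda>s. H s * cnj (H s))"
      by (simp add: complex_norm_square fun_eq_iff del: of_real_power)
    ultimately have "I = of_real (integral {0..2*pi} (\<lambda>s. (cmod (H s))\<^sup>2))"
      unfolding I_def by (simp add: integral_unique)
    then have "integral {0..2*pi} (\<lambda>s. (cmod (H s))\<^sup>2) = 0" using I0 by simp
    then show ?thesis using hi by simp
  qed
  then have "(cmod (H t))\<^sup>2 = 0"
    using has_integral_0_cbox_imp_0[of 0 "2*pi" "\<lambda>s. (cmod (H s))\<^sup>2" t] t
    using continuous_on_power[OF continuous_on_norm[OF cH], of 2] pi_gt_zero by auto
  then show ?thesis by simp
qed

definition SP :: "(nat \<Rightarrow> real \<Rightarrow> complex) \<Rightarrow> bool" where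
  "SP D \<longleftrightarrow> (\<forall>n t. (D n has_vector_derivative D (Suc n) t) (at t)) \<and> (\<forall>t. D 0 (t + 2*pi) = D 0 t)"

lemma SP_der: "SP D \<Longrightarrow> (D n has_vector_derivative D (Suc n) t) (at t within A)"
  unfolding SP_def by (auto intro: has_vector_derivative_at_within)

lemma SP_cont: "SP D \<Longrightarrow> continuous_on A (D n)"
  by (rule continuous_at_imp_continuous_on)
     (auto intro: has_vector_derivative_continuous SP_der[where A=UNIV, simplified])

lemma SP_period: "SP D \<Longrightarrow> D n (t + 2*pi) = D n t"
proof (induction n arbitrary: t)
  case 0 then show ?case by (simp add: SP_def)
next
  case (Suc n)
  have "((\<lambda>s. D n (s + 2*pi)) has_vector_derivative D (Suc n) (t + 2*pi)) (at t)"
  proof -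
    have "((\<lambda>s. s + 2*pi) has_vector_derivative 1) (at t)"
      by (auto intro!: derivative_eq_intros)
    from vector_diff_chain_at[OF this SP_der[OF Suc.prems, of n "t + 2*pi" UNIV]]
    show ?thesis by (simp add: o_def)
  qed
  moreover have "(\<lambda>s. D n (s + 2*pi)) = D n" using Suc by auto
  ultimately have "(D n has_vector_derivative D (Suc n) (t + 2*pi)) (at t)" by simp
  from vector_derivative_unique_at[OF this SP_der[OF Suc.prems, of n t UNIV]] show ?case .
qed

lemma fc_der:
  assumes "SP D"
  shows "fc (D (Suc n)) m = \<i> * of_int m * fc (D n) m"
proof -
  have "((\<lambda>t. D (Suc n) t * E (-m) t + D n t * (\<i> * of_int (-m) * E (-m) t)) has_integral
        (D n (2*pi) * E (-m) (2*pi) - D n 0 * E (-m) 0)) {0..2*pi}"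
  proof (rule fundamental_theorem_of_calculus)
    fix t assume "t \<in> {0..2*pi}"
    show "((\<lambda>t. D n t * E (-m) t) has_vector_derivative
           D (Suc n) t * E (-m) t + D n t * (\<i> * of_int (-m) * E (-m) t)) (at t within {0..2*pi})"
      using has_vector_derivative_mult[OF SP_der[OF assms, of n t "{0..2*pi}"] E_deriv[of "-m" t "{0..2*pi}"]]
      by (simp add: algebra_simps)
  qed simp
  moreover have "D n (2*pi) = D n 0" using SP_period[OF assms, of n 0] by simp
  moreover have "E (-m) 0 = 1" by (simp add: E_def)
  ultimately have h: "((\<lambda>t. D (Suc n) t * E (-m) t + D n t * (\<i> * of_int (-m) * E (-m) t)) has_integral 0) {0..2*pi}"
    by (simp add: E_2pi)
  have i1: "(\<lambda>t. D (Suc n) t * E (-m) t) integrable_on {0..2*pi}"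
    by (intro integrable_cont continuous_intros SP_cont[OF assms])
  have i2: "(\<lambda>t. D n t * (\<i> * of_int (-m) * E (-m) t)) integrable_on {0..2*pi}"
    by (intro integrable_cont continuous_intros SP_cont[OF assms])
  have "integral {0..2*pi} (\<lambda>t. D (Suc n) t * E (-m) t) + integral {0..2*pi} (\<lambda>t. D n t * (\<i> * of_int (-m) * E (-m) t)) = 0"
    using integral_add[OF i1 i2] integral_unique[OF h] by simp
  moreover have "integral {0..2*pi} (\<lambda>t. D n t * (\<i> * of_int (-m) * E (-m) t))
      = - (\<i> * of_int m) * integral {0..2*pi} (\<lambda>t. D n t * E (-m) t)"
  proof -
    have "(\<lambda>t. D n t * (\<i> * of_int (-m) * E (-m) t)) = (\<lambda>t. (- (\<i> * of_int m)) * (D n t * E (-m) t))"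
      by (simp add: fun_eq_iff algebra_simps)
    then show ?thesis by (simp only: integral_mult_right)
  qed
  ultimately have "integral {0..2*pi} (\<lambda>t. D (Suc n) t * E (-m) t) = \<i> * of_int m * integral {0..2*pi} (\<lambda>t. D n t * E (-m) t)"
    by (simp add: algebra_simps)
  then show ?thesis by (simp add: fc_def)
qed

lemma fc_bound:
  assumes "continuous_on {0..2*pi} U" "\<And>t. t \<in> {0..2*pi} \<Longrightarrow> norm (U t) \<le> B"
  shows "norm (fc U m) \<le> B"
proof -
  have "norm (integral {0..2*pi} (\<lambda>t. U t * E (-m) t)) \<le> B * (2*pi - 0)"
    by (rule integral_bound) (auto intro!: continuous_intros assms simp: norm_mult)
  then show ?thesis by (simp add: fc_def norm_divide pi_gt_zero field_simps)
qed

lemma SP_bound: "SP D \<Longrightarrow> \<exists>B. \<forall>t\<in>{0..2*pi}. norm (D n t) \<le> B"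
  using bounded_cont[OF SP_cont] unfolding bounded_iff by (meson imageI)

lemma fc_iter: "SP D \<Longrightarrow> fc (D k) m = (\<i> * of_int m) ^ k * fc (D 0) m"
  by (induction k) (simp_all add: fc_der)

lemma decay:
  assumes "SP D"
  obtains B where "B \<ge> 0" "\<And>m. m \<noteq> 0 \<Longrightarrow> norm (fc (D 0) m) \<le> B / (real_of_int \<bar>m\<bar>) ^ k"
proof -
  obtain B where B: "\<forall>t\<in>{0..2*pi}. norm (D k t) \<le> B" using SP_bound[OF assms(1)] by blast
  have "norm (D k 0) \<le> B" using B by simp
  then have B0: "B \<ge> 0" using norm_ge_zero order.trans by blast
  have "norm (fc (D 0) m) \<le> B / (real_of_int \<bar>m\<bar>) ^ k" if "m \<noteq> 0" for m
  proof -
    have "norm (fc (D k) m) \<le> B"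
      by (rule fc_bound[OF SP_cont[OF assms(1)]]) (use B in blast)
    moreover have eq: "norm (fc (D k) m) = (real_of_int \<bar>m\<bar>) ^ k * norm (fc (D 0) m)"
      unfolding fc_iter[OF assms(1), of k m] by (simp add: norm_mult norm_power)
    moreover have pos: "(real_of_int \<bar>m\<bar>) ^ k > 0" using that by simp
    ultimately have "(real_of_int \<bar>m\<bar>) ^ k * norm (fc (D 0) m) \<le> B" by simp
    then show ?thesis using pos by (simp add: pos_le_divide_eq mult.commute)
  qed
  then show ?thesis using that B0 by blast
qed

lemma abssum_decay:
  assumes "B \<ge> 0" "\<And>m. m \<noteq> 0 \<Longrightarrow> norm (a m) \<le> B / (real_of_int \<bar>m\<bar>) ^ 2"
  shows "abssum a"
  unfolding abssum_def
proof (rule summable_comparison_test'[where N=1])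
  show "summable (\<lambda>k::nat. 2 * B * inverse (real k ^ 2))"
    by (intro summable_mult inverse_power_summable) simp
  fix k :: nat assume k: "k \<ge> 1"
  have "cmod (a (int k)) \<le> B / (real k)^2" using assms(2)[of "int k"] k by simp
  moreover have "cmod (a (- int k)) \<le> B / (real k)^2" using assms(2)[of "- int k"] k by simp
  ultimately show "norm (cmod (a (int k)) + cmod (a (- int k))) \<le> 2 * B * inverse (real k ^ 2)"
    by (simp add: divide_inverse)
qed

lemma SP_abssum: "SP D \<Longrightarrow> abssum (fc (D 0))"
  using decay[of D 2] abssum_decay by metis

lemma ssum_period: "ssum a (2*pi) = ssum a 0"
proof -
  have "E n 0 = 1" for n by (simp add: E_def)
  then have "T a k (2*pi) = T a k 0" for k by (simp add: T_def E_2pi)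
  then show ?thesis by (simp add: ssum_def)
qed

lemma fc_diff:
  assumes "continuous_on {0..2*pi} U" "continuous_on {0..2*pi} V"
  shows "fc (\<lambda>t. U t - V t) m = fc U m - fc V m"
proof -
  have i1: "(\<lambda>t. U t * E (-m) t) integrable_on {0..2*pi}"
    by (intro integrable_cont continuous_intros assms)
  have i2: "(\<lambda>t. V t * E (-m) t) integrable_on {0..2*pi}"
    by (intro integrable_cont continuous_intros assms)
  have "integral {0..2*pi} (\<lambda>t. (U t - V t) * E (-m) t) =
        integral {0..2*pi} (\<lambda>t. U t * E (-m) t) - integral {0..2*pi} (\<lambda>t. V t * E (-m) t)"
    unfolding integral_diff[OF i1 i2, symmetric] by (simp add: algebra_simps)
  then show ?thesis unfolding fc_def by (simp add: diff_divide_distrib)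
qed

lemma SP_complete:
  assumes "SP D" "t \<in> {0..2*pi}"
  shows "ssum (fc (D 0)) t = D 0 t"
proof -
  let ?H = "\<lambda>t. D 0 t - ssum (fc (D 0)) t"
  have ab: "abssum (fc (D 0))" by (rule SP_abssum[OF assms(1)])
  have c: "continuous_on {0..2*pi} ?H"
    by (intro continuous_intros SP_cont[OF assms(1)] continuous_ssum ab)
  have "?H t = 0"
  proof (rule fc_zero_imp_zero[OF c])
    show "?H 0 = ?H (2*pi)" using SP_period[OF assms(1), of 0 0] ssum_period by simp
    fix n show "fc ?H n = 0"
      by (subst fc_diff) (auto intro: SP_cont[OF assms(1)] continuous_ssum ab simp: fc_ssum[OF ab])
  qed (use assms in auto)
  then show ?thesis by simp
qed

lemma SP_ulim:
  assumes "SP D"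
  shows "uniform_limit {0..2*pi} (psum (fc (D 0))) (D 0) sequentially"
proof -
  have "uniform_limit {0..2*pi} (psum (fc (D 0))) (ssum (fc (D 0))) sequentially"
    by (rule uniform_limit_on_subset[OF psum_ulim[OF SP_abssum[OF assms]]]) auto
  then show ?thesis
    by (rule uniform_limit_cong'[THEN iffD1, rotated 2]) (auto simp: SP_complete[OF assms])
qed

lemma inverse_unit: "norm (w::complex) = 1 \<Longrightarrow> 1 / w = cnj w"
proof -
  assume "norm w = 1"
  then have "w * cnj w = 1" using complex_norm_square[of w] by simp
  then show ?thesis by (metis divide_complex_def mult.commute mult_1 mult_zero_left nonzero_mult_div_cancel_left zero_neq_one)
qed

lemma winding_int:
  assumes "SP D" "\<And>t. norm (D 0 t) = 1"
  shows "winding_number (\<lambda>s. D 0 (2 * pi * s)) 0 =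
           1/(2*pi*\<i>) * integral {0..2*pi} (\<lambda>t. D 1 t * cnj (D 0 t))"
proof -
  let ?g = "\<lambda>s. D 0 (2 * pi * s)"
  have der: "(?g has_vector_derivative (2*pi) *\<^sub>R D 1 (2 * pi * s)) (at s)" for s
  proof -
    have "((\<lambda>s. 2 * pi * s) has_vector_derivative 2*pi) (at s)"
      by (auto intro!: derivative_eq_intros)
    from vector_diff_chain_at[OF this SP_der[OF assms(1), of 0 "2 * pi * s" UNIV]]
    show ?thesis by (simp add: o_def)
  qed
  have vp: "valid_path ?g"
    unfolding valid_path_def
  proof (rule C1_differentiable_imp_piecewise)
    show "?g C1_differentiable_on {0..1}"
      unfolding C1_differentiable_on_def
    proof (intro exI conjI ballI)
      show "(?g has_vector_derivative (2*pi) *\<^sub>R D 1 (2 * pi * x)) (at x)" for x by (rule der)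
      show "continuous_on {0..1} (\<lambda>s. (2*pi) *\<^sub>R D 1 (2 * pi * s))"
        by (intro continuous_intros continuous_on_compose2[OF SP_cont[OF assms(1)]]) auto
    qed
  qed
  have np: "0 \<notin> path_image ?g"
    using assms(2) by (auto simp: path_image_def) (metis norm_zero zero_neq_one)
  define J where "J = integral {0..2*pi} (\<lambda>t. D 1 t * cnj (D 0 t))"
  have gJ: "((\<lambda>t. D 1 t * cnj (D 0 t)) has_integral J) {0..2*pi}"
    unfolding J_def by (intro integrable_integral integrable_cont continuous_intros SP_cont[OF assms(1)])
  have img: "(\<lambda>x. x / (2*pi)) ` {0..2*pi} = {0..1}"
  proof -
    have "(\<lambda>x. x / (2*pi)) ` {0..2*pi} = {0 / (2*pi)..(2*pi) / (2*pi)}"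
      by (rule image_divide_atLeastAtMost) simp
    then show ?thesis by simp
  qed
  have "((\<lambda>x. D 1 (2 * pi * x) * cnj (D 0 (2 * pi * x))) has_integral (1 / \<bar>2*pi\<bar>) *\<^sub>R J) {0..1}"
    using has_integral_stretch_real[OF gJ, of "2*pi"] img by simp
  then have "((\<lambda>x. of_real (2*pi) * (D 1 (2 * pi * x) * cnj (D 0 (2 * pi * x)))) has_integral
              of_real (2*pi) * ((1 / \<bar>2*pi\<bar>) *\<^sub>R J)) {0..1}"
    by (rule has_integral_mult_right)
  then have "((\<lambda>x. of_real (2*pi) * (D 1 (2 * pi * x) * cnj (D 0 (2 * pi * x)))) has_integral J) {0..1}"
    by (simp add: scaleR_conv_of_real)
  then have "((\<lambda>w. 1/(w - 0)) has_contour_integral J) ?g"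
    unfolding has_contour_integral_def
  proof (rule has_integral_eq[rotated])
    fix x :: real assume x: "x \<in> {0..1}"
    have "vector_derivative ?g (at x within {0..1}) = (2*pi) *\<^sub>R D 1 (2 * pi * x)"
      using x by (intro vector_derivative_at_within_ivl[OF der]) auto
    then show "of_real (2*pi) * (D 1 (2 * pi * x) * cnj (D 0 (2 * pi * x))) =
          1 / (?g x - 0) * vector_derivative ?g (at x within {0..1})"
      by (simp add: inverse_unit[OF assms(2)] scaleR_conv_of_real)
  qed
  then have "contour_integral ?g (\<lambda>w. 1/(w - 0)) = J" by (rule contour_integral_unique)
  then show ?thesis using winding_number_valid_path[OF vp np] by (simp add: J_def)
qed

lemma degree_sum:
  assumes "SP D" "\<And>t. norm (D 0 t) = 1"
    and "winding_number (\<lambda>s. D 0 (2 * pi * s)) 0 = of_int d"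
  shows "(\<lambda>N. \<Sum>n\<in>{-int N..int N}. real_of_int n * (cmod (fc (D 0) n))\<^sup>2) \<longlonglongrightarrow> real_of_int d"
proof -
  let ?a = "fc (D 0)"
  define J where "J = integral {0..2*pi} (\<lambda>t. D 1 t * cnj (D 0 t))"
  have ab: "abssum ?a" by (rule SP_abssum[OF assms(1)])
  have "(\<lambda>N. 2*pi * (\<Sum>n\<in>{-int N..int N}. cnj (?a n) * fc (D 1) n))
           \<longlonglongrightarrow> integral {0..2*pi} (\<lambda>t. D 1 t * cnj (ssum ?a t))"
    by (rule lim_int_cnj[OF ab SP_cont[OF assms(1)]])
  moreover have "integral {0..2*pi} (\<lambda>t. D 1 t * cnj (ssum ?a t)) = J"
    unfolding J_def by (rule integral_cong) (simp add: SP_complete[OF assms(1)])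
  moreover have "2*pi * (\<Sum>n\<in>{-int N..int N}. cnj (?a n) * fc (D 1) n)
       = (2*pi*\<i>) * of_real (\<Sum>n\<in>{-int N..int N}. real_of_int n * (cmod (?a n))\<^sup>2)" for N
  proof -
    have "cnj (?a n) * fc (D 1) n = \<i> * of_real (real_of_int n * (cmod (?a n))\<^sup>2)" for n
      using fc_der[OF assms(1), of 0 n] complex_norm_square[of "?a n"]
      by (simp add: algebra_simps)
    then show ?thesis by (simp add: sum_distrib_left algebra_simps)
  qed
  ultimately have "(\<lambda>N. (2*pi*\<i>) * of_real (\<Sum>n\<in>{-int N..int N}. real_of_int n * (cmod (?a n))\<^sup>2)) \<longlonglongrightarrow> J"
    by (simp only:)
  then have "(\<lambda>N. (1/(2*pi*\<i>)) * ((2*pi*\<i>) * of_real (\<Sum>n\<in>{-int N..int N}. real_of_int n * (cmod (?a n))\<^sup>2)))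
        \<longlonglongrightarrow> (1/(2*pi*\<i>)) * J"
    by (rule tendsto_mult_left)
  moreover have "(1/(2*pi*\<i>)) * J = of_int d"
    using winding_int[OF assms(1,2)] assms(3) by (simp add: J_def)
  ultimately have "(\<lambda>N. complex_of_real (\<Sum>n\<in>{-int N..int N}. real_of_int n * (cmod (?a n))\<^sup>2))
        \<longlonglongrightarrow> of_real (real_of_int d)"
    by (simp add: pi_neq_zero)
  then show ?thesis by (simp only: tendsto_of_real_iff)
qed

lemma periodic_translate:
  fixes G :: "real \<Rightarrow> ennreal"
  assumes [measurable]: "G \<in> borel_measurable borel" and per: "\<And>y. G (y + 2*pi) = G y"
    and x: "x \<in> {0..2*pi}"
  shows "(\<integral>\<^sup>+t. G (x + t) * indicator {0..2*pi} t \<partial>lborel) = (\<integral>\<^sup>+y. G y * indicator {0..2*pi} y \<partial>lborel)"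
proof -
  have "(\<integral>\<^sup>+y. G y * indicator {x..x+2*pi} y \<partial>lborel)
        = (\<integral>\<^sup>+t. G (x + t) * indicator {x..x+2*pi} (x + t) \<partial>lborel)"
    using nn_integral_real_affine[of "\<lambda>y. G y * indicator {x..x+2*pi} y" 1 x] by simp
  also have "\<dots> = (\<integral>\<^sup>+t. G (x + t) * indicator {0..2*pi} t \<partial>lborel)"
    by (intro nn_integral_cong) (auto simp: indicator_def)
  finally have 1: "(\<integral>\<^sup>+t. G (x + t) * indicator {0..2*pi} t \<partial>lborel) = (\<integral>\<^sup>+y. G y * indicator {x..x+2*pi} y \<partial>lborel)" ..
  have "(\<integral>\<^sup>+y. G y * indicator {x..x+2*pi} y \<partial>lborel)
      = (\<integral>\<^sup>+y. G y * indicator {x..<2*pi} y + G y * indicator {2*pi..x+2*pi} y \<partial>lborel)"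
    using x by (intro nn_integral_cong) (auto simp: indicator_def)
  also have "\<dots> = (\<integral>\<^sup>+y. G y * indicator {x..<2*pi} y \<partial>lborel) + (\<integral>\<^sup>+y. G y * indicator {2*pi..x+2*pi} y \<partial>lborel)"
    by (rule nn_integral_add) auto
  also have "(\<integral>\<^sup>+y. G y * indicator {2*pi..x+2*pi} y \<partial>lborel)
       = (\<integral>\<^sup>+s. G (2*pi + s) * indicator {2*pi..x+2*pi} (2*pi + s) \<partial>lborel)"
    using nn_integral_real_affine[of "\<lambda>y. G y * indicator {2*pi..x+2*pi} y" 1 "2*pi"] by simp
  also have "\<dots> = (\<integral>\<^sup>+s. G s * indicator {0..x} s \<partial>lborel)"
    by (intro nn_integral_cong) (auto simp: indicator_def per add.commute)
  also have "(\<integral>\<^sup>+y. G y * indicator {x..<2*pi} y \<partial>lborel) + (\<integral>\<^sup>+s. G s * indicator {0..x} s \<partial>lborel)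
      = (\<integral>\<^sup>+y. G y * indicator {x..<2*pi} y + G y * indicator {0..x} y \<partial>lborel)"
    by (rule nn_integral_add[symmetric]) auto
  also have "\<dots> = (\<integral>\<^sup>+y. G y * indicator {0..2*pi} y \<partial>lborel)"
  proof (rule nn_integral_cong_AE)
    show "AE y in lborel. G y * indicator {x..<2*pi} y + G y * indicator {0..x} y = G y * indicator {0..2*pi} y"
      using AE_lborel_singleton[of "2*pi"] AE_lborel_singleton[of x]
      by eventually_elim (use x in \<open>auto simp: indicator_def\<close>)
  qed
  finally show ?thesis using 1 by simp
qed

lemma int_norm_sq:
  assumes "continuous_on {0..2*pi} P"
  shows "((\<lambda>t. (cmod (P t))\<^sup>2) has_integral Re (integral {0..2*pi} (\<lambda>t. P t * cnj (P t)))) {0..2*pi}"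
proof -
  have ci: "continuous_on {0..2*pi} (\<lambda>s. (cmod (P s))\<^sup>2)" by (intro continuous_intros assms)
  then have hi: "((\<lambda>s. (cmod (P s))\<^sup>2) has_integral integral {0..2*pi} (\<lambda>s. (cmod (P s))\<^sup>2)) {0..2*pi}"
    by (intro integrable_integral integrable_cont_real)
  from has_integral_of_real[OF hi] have
    "((\<lambda>s. complex_of_real ((cmod (P s))\<^sup>2)) has_integral of_real (integral {0..2*pi} (\<lambda>s. (cmod (P s))\<^sup>2))) {0..2*pi}" .
  moreover have "(\<lambda>s. complex_of_real ((cmod (P s))\<^sup>2)) = (\<lambda>s. P s * cnj (P s))"
    by (simp add: complex_norm_square fun_eq_iff del: of_real_power)
  ultimately have "integral {0..2*pi} (\<lambda>t. P t * cnj (P t)) = of_real (integral {0..2*pi} (\<lambda>s. (cmod (P s))\<^sup>2))"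
    by (simp add: integral_unique)
  then show ?thesis using hi by simp
qed

lemma E1_ne1: "t \<in> {0<..<2*pi} \<Longrightarrow> E 1 t \<noteq> 1"
  using cis_eq_02pi[of t 0] by (auto simp: E_def)

lemma E_pow: "E (int k) t = (E 1 t) ^ k"
  unfolding E_def of_int_of_nat_eq of_int_1 mult_1 by (simp add: Complex.DeMoivre)

lemma fejer:
  "(\<integral>\<^sup>+t. ennreal ((cmod (E (int k) t - 1))\<^sup>2 / (cmod (E 1 t - 1))\<^sup>2) * indicator {0..2*pi} t \<partial>lborel)
     = ennreal (2*pi*real k)"
proof -
  define P where "P t = (\<Sum>n\<in>int ` {..<k}. 1 * E n t)" for t
  have P: "P t = (\<Sum>j<k. (E 1 t) ^ j)" for t
    unfolding P_def by (subst sum.reindex) (auto simp: E_pow)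
  have eq: "(cmod (E (int k) t - 1))\<^sup>2 / (cmod (E 1 t - 1))\<^sup>2 = (cmod (P t))\<^sup>2" if "t \<in> {0<..<2*pi}" for t
  proof -
    have "P t = ((E 1 t) ^ k - 1) / (E 1 t - 1)" unfolding P using E1_ne1[OF that] by (rule geometric_sum)
    then show ?thesis by (simp add: E_pow norm_divide power_divide)
  qed
  have cP: "continuous_on {0..2*pi} P" unfolding P_def by (intro continuous_intros)
  have "integral {0..2*pi} (\<lambda>t. P t * cnj (P t)) = of_real (2*pi * real k)"
    unfolding P_def by (subst parseval_trig) (auto simp: card_image)
  then have hi: "((\<lambda>t. (cmod (P t))\<^sup>2) has_integral (2*pi*real k)) {0..2*pi}"
    using int_norm_sq[OF cP] by simp
  have "(\<integral>\<^sup>+t. ennreal ((cmod (E (int k) t - 1))\<^sup>2 / (cmod (E 1 t - 1))\<^sup>2) * indicator {0..2*pi} t \<partial>lborel)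
      = (\<integral>\<^sup>+t. ennreal (indicator {0..2*pi} t * (cmod (P t))\<^sup>2) \<partial>lborel)"
  proof (rule nn_integral_cong_AE)
    show "AE t in lborel. ennreal ((cmod (E (int k) t - 1))\<^sup>2 / (cmod (E 1 t - 1))\<^sup>2) * indicator {0..2*pi} t
        = ennreal (indicator {0..2*pi} t * (cmod (P t))\<^sup>2)"
      using AE_lborel_singleton[of 0] AE_lborel_singleton[of "2*pi"]
    proof eventually_elim
      case (elim t)
      show ?case
      proof (cases "t \<in> {0<..<2*pi}")
        case True then show ?thesis by (simp add: eq indicator_def)
      next
        case False then show ?thesis using elim by (auto simp: indicator_def)
      qed
    qed
  qed
  also have "\<dots> = ennreal (2*pi*real k)"
    by (rule nn_integral_has_integral_lebesgue[OF _ hi]) simp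
  finally show ?thesis .
qed

lemma int_cnj_real:
  assumes "continuous_on {0..2*pi} P"
  shows "integral {0..2*pi} (\<lambda>t. P t * cnj (P t)) = of_real (integral {0..2*pi} (\<lambda>s. (cmod (P s))\<^sup>2))"
proof -
  have ci: "continuous_on {0..2*pi} (\<lambda>s. (cmod (P s))\<^sup>2)" by (intro continuous_intros assms)
  then have hi: "((\<lambda>s. (cmod (P s))\<^sup>2) has_integral integral {0..2*pi} (\<lambda>s. (cmod (P s))\<^sup>2)) {0..2*pi}"
    by (intro integrable_integral integrable_cont_real)
  from has_integral_of_real[OF hi] have
    "((\<lambda>s. complex_of_real ((cmod (P s))\<^sup>2)) has_integral of_real (integral {0..2*pi} (\<lambda>s. (cmod (P s))\<^sup>2))) {0..2*pi}" .
  moreover have "(\<lambda>s. complex_of_real ((cmod (P s))\<^sup>2)) = (\<lambda>s. P s * cnj (P s))"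
    by (simp add: complex_norm_square fun_eq_iff del: of_real_power)
  ultimately show ?thesis by (simp add: integral_unique)
qed

lemma ssum_period2: "ssum a (x + 2*pi) = ssum a x"
proof -
  have "T a k (x + 2*pi) = T a k x" for k by (simp add: T_def E_period)
  then show ?thesis by (simp add: ssum_def)
qed

lemma SP_complete4:
  assumes "SP F" "x \<in> {0..4*pi}"
  shows "ssum (fc (F 0)) x = F 0 x"
proof (cases "x \<le> 2*pi")
  case True then show ?thesis using assms by (intro SP_complete) auto
next
  case False
  then have "x - 2*pi \<in> {0..2*pi}" using assms by auto
  from SP_complete[OF assms(1) this] show ?thesis
    using ssum_period2[of "fc (F 0)" "x - 2*pi"] SP_period[OF assms(1), of 0 "x - 2*pi"] by simp
qed

lemma summable_T: "abssum a \<Longrightarrow> summable (\<lambda>k. T a k x)"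
  unfolding abssum_def
  by (rule summable_norm_cancel, rule summable_comparison_test[of _ "\<lambda>k. cmod (a (int k)) + cmod (a (- int k))"])
     (auto simp: T_def norm_mult intro!: order.trans[OF norm_triangle_ineq])

lemma sym_to_nat:
  assumes "b 0 = 0"
  shows "(\<Sum>n\<in>{-int N..int N}. b n) = (\<Sum>k<Suc N. b (int k) + b (- int k))"
proof (induction N)
  case 0 then show ?case using assms by simp
next
  case (Suc N)
  show ?case unfolding sym_sum_Suc Suc by (simp add: algebra_simps)
qed

lemma norm_E_minus: "cmod (E (- n) t - 1) = cmod (E n t - 1)"
proof -
  have "E (- n) t - 1 = cnj (E n t - 1)" by (simp add: E_cnj)
  then show ?thesis by (simp only: complex_mod_cnj)
qed

lemma shift_parseval:
  assumes F: "SP F" and t: "t \<in> {0..2*pi}"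
  shows "(\<lambda>k. (cmod (E (int k) t - 1))\<^sup>2 * ((cmod (fc (F 0) (int k)))\<^sup>2 + (cmod (fc (F 0) (- int k)))\<^sup>2))
           sums (integral {0..2*pi} (\<lambda>x. (cmod (F 0 (x + t) - F 0 x))\<^sup>2) / (2*pi))"
proof -
  define c where "c = fc (F 0)"
  define a' where "a' n = c n * (E n t - 1)" for n
  define G where "G x = F 0 (x + t) - F 0 x" for x
  have ab: "abssum c" unfolding c_def by (rule SP_abssum[OF F])
  have ab': "abssum a'"
    using ab unfolding abssum_def
  proof (rule summable_comparison_test'[where N=0, OF summable_mult[of _ 2]])
    fix k :: nat
    have "cmod (E n t - 1) \<le> 2" for n
      using norm_triangle_ineq4[of "E n t" 1] by simp
    then have "cmod (a' n) \<le> cmod (c n) * 2" for n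
      unfolding a'_def norm_mult by (intro mult_left_mono) auto
    then show "norm (cmod (a' (int k)) + cmod (a' (- int k))) \<le> 2 * (cmod (c (int k)) + cmod (c (- int k)))"
      by (smt (verit) norm_ge_zero real_norm_def)
  qed
  have ssa: "ssum a' x = ssum c (x + t) - ssum c x" for x
  proof -
    have "T a' k x = T c k (x + t) - T c k x" for k
    proof -
      have Ea: "E n (x + t) = E n x * E n t" for n by (simp add: E_def cis_mult algebra_simps)
      have Eb: "E n (t + x) = E n t * E n x" for n by (simp add: E_def cis_mult algebra_simps)
      show ?thesis by (simp add: T_def a'_def Ea Eb algebra_simps)
    qed
    then show ?thesis unfolding ssum_def
      by (simp add: suminf_diff[OF summable_T[OF ab] summable_T[OF ab]])
  qed
  have Geq: "ssum a' x = G x" if "x \<in> {0..2*pi}" for x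
    unfolding ssa G_def c_def using that t by (simp add: SP_complete4[OF F])
  have cG: "continuous_on {0..2*pi} G"
    unfolding G_def by (intro continuous_intros continuous_on_compose2[OF SP_cont[OF F]]) auto
  have fcG: "fc G n = a' n" for n
  proof -
    have "fc G n = fc (ssum a') n"
      unfolding fc_def by (rule arg_cong[where f="\<lambda>x. x / _"], rule integral_cong) (simp add: Geq)
    then show ?thesis using fc_ssum[OF ab'] by simp
  qed
  have "(\<lambda>N. 2*pi * (\<Sum>n\<in>{-int N..int N}. cnj (a' n) * fc G n))
           \<longlonglongrightarrow> integral {0..2*pi} (\<lambda>x. G x * cnj (ssum a' x))"
    by (rule lim_int_cnj[OF ab' cG])
  moreover have "integral {0..2*pi} (\<lambda>x. G x * cnj (ssum a' x)) = integral {0..2*pi} (\<lambda>x. G x * cnj (G x))"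
    by (rule integral_cong) (simp add: Geq)
  moreover have "\<dots> = of_real (integral {0..2*pi} (\<lambda>x. (cmod (G x))\<^sup>2))"
    by (rule int_cnj_real[OF cG])
  moreover have "2*pi * (\<Sum>n\<in>{-int N..int N}. cnj (a' n) * fc G n) =
      of_real (2*pi * (\<Sum>n\<in>{-int N..int N}. (cmod (a' n))\<^sup>2))" for N
    unfolding fcG of_real_mult of_real_sum
    by (simp add: complex_norm_square mult.commute del: of_real_power)
  ultimately have "(\<lambda>N. of_real (2*pi * (\<Sum>n\<in>{-int N..int N}. (cmod (a' n))\<^sup>2)))
        \<longlonglongrightarrow> complex_of_real (integral {0..2*pi} (\<lambda>x. (cmod (G x))\<^sup>2))"
    by (simp only:)
  then have "(\<lambda>N. 2*pi * (\<Sum>n\<in>{-int N..int N}. (cmod (a' n))\<^sup>2))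
        \<longlonglongrightarrow> integral {0..2*pi} (\<lambda>x. (cmod (G x))\<^sup>2)"
    by (simp only: tendsto_of_real_iff)
  then have "(\<lambda>N. (1/(2*pi)) * (2*pi * (\<Sum>n\<in>{-int N..int N}. (cmod (a' n))\<^sup>2)))
        \<longlonglongrightarrow> (1/(2*pi)) * integral {0..2*pi} (\<lambda>x. (cmod (G x))\<^sup>2)"
    by (rule tendsto_mult_left)
  then have lim: "(\<lambda>N. \<Sum>n\<in>{-int N..int N}. (cmod (a' n))\<^sup>2)
        \<longlonglongrightarrow> integral {0..2*pi} (\<lambda>x. (cmod (G x))\<^sup>2) / (2*pi)"
    by simp
  have "(\<Sum>n\<in>{-int N..int N}. (cmod (a' n))\<^sup>2) =
     (\<Sum>k<Suc N. (cmod (E (int k) t - 1))\<^sup>2 * ((cmod (c (int k)))\<^sup>2 + (cmod (c (- int k)))\<^sup>2))" for N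
  proof -
    have "(\<Sum>n\<in>{-int N..int N}. (cmod (a' n))\<^sup>2) = (\<Sum>k<Suc N. (cmod (a' (int k)))\<^sup>2 + (cmod (a' (- int k)))\<^sup>2)"
      by (rule sym_to_nat) (simp add: a'_def)
    also have "\<dots> = (\<Sum>k<Suc N. (cmod (E (int k) t - 1))\<^sup>2 * ((cmod (c (int k)))\<^sup>2 + (cmod (c (- int k)))\<^sup>2))"
      by (intro sum.cong refl) (simp only: a'_def norm_mult power_mult_distrib norm_E_minus, simp add: algebra_simps)
    finally show ?thesis .
  qed
  with lim have "(\<lambda>N. \<Sum>k<Suc N. (cmod (E (int k) t - 1))\<^sup>2 * ((cmod (c (int k)))\<^sup>2 + (cmod (c (- int k)))\<^sup>2))
        \<longlonglongrightarrow> integral {0..2*pi} (\<lambda>x. (cmod (G x))\<^sup>2) / (2*pi)" by simp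
  then have "(\<lambda>N. \<Sum>k<N. (cmod (E (int k) t - 1))\<^sup>2 * ((cmod (c (int k)))\<^sup>2 + (cmod (c (- int k)))\<^sup>2))
        \<longlonglongrightarrow> integral {0..2*pi} (\<lambda>x. (cmod (G x))\<^sup>2) / (2*pi)"
    by (rule LIMSEQ_imp_Suc)
  then show ?thesis unfolding sums_def c_def G_def by simp
qed

lemma cont_meas: "continuous_on UNIV (f :: real \<Rightarrow> complex) \<Longrightarrow> f \<in> borel_measurable borel"
  by (rule borel_measurable_continuous_onI)

lemma cis_meas [measurable]: "cis \<in> borel_measurable borel"
  by (rule borel_measurable_continuous_onI) (intro continuous_intros)

lemma E_meas [measurable]: "E n \<in> borel_measurable borel"
  by (rule borel_measurable_continuous_onI) (intro continuous_intros)

lemma meas_test: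
  assumes [measurable]: "F0 \<in> borel_measurable borel"
  shows "(\<lambda>(x, t). ennreal ((cmod (F0 x - F0 (x + t)))\<^sup>2 / (cmod (cis x - cis (x + t)))\<^sup>2)
             * indicator {0..2*pi} t * indicator {0..2*pi} x) \<in> borel_measurable (lborel \<Otimes>\<^sub>M lborel)"
  by measurable

lemma cis_shift_dist: "cmod (cis x - cis (x + t)) = cmod (E 1 t - 1)"
proof -
  have "cis x - cis (x + t) = - cis x * (E 1 t - 1)" by (simp add: E_def cis_mult algebra_simps)
  then show ?thesis by (simp add: norm_mult)
qed

lemma inner_t:
  assumes F: "SP F" and t: "t \<in> {0<..<2*pi}"
  shows "(\<integral>\<^sup>+x. ennreal ((cmod (F 0 x - F 0 (x + t)))\<^sup>2 / (cmod (cis x - cis (x + t)))\<^sup>2) * indicator {0..2*pi} x \<partial>lborel)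
     = (\<Sum>k. ennreal (2*pi * ((cmod (fc (F 0) (int k)))\<^sup>2 + (cmod (fc (F 0) (- int k)))\<^sup>2)
                        * ((cmod (E (int k) t - 1))\<^sup>2 / (cmod (E 1 t - 1))\<^sup>2)))"
proof -
  define K where "K = (cmod (E 1 t - 1))\<^sup>2"
  have K: "K > 0" unfolding K_def using E1_ne1[OF t] by simp
  define I where "I = integral {0..2*pi} (\<lambda>x. (cmod (F 0 (x + t) - F 0 x))\<^sup>2)"
  have cG: "continuous_on {0..2*pi} (\<lambda>x. F 0 (x + t) - F 0 x)"
    by (intro continuous_intros continuous_on_compose2[OF SP_cont[OF F]]) auto
  have hI: "((\<lambda>x. (cmod (F 0 (x + t) - F 0 x))\<^sup>2) has_integral I) {0..2*pi}"
    unfolding I_def by (intro integrable_integral integrable_cont_real continuous_intros cG)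
  have hI2: "((\<lambda>x. (cmod (F 0 (x + t) - F 0 x))\<^sup>2 / K) has_integral I / K) {0..2*pi}"
    by (rule has_integral_divide[OF hI])
  have "(\<integral>\<^sup>+x. ennreal ((cmod (F 0 x - F 0 (x + t)))\<^sup>2 / (cmod (cis x - cis (x + t)))\<^sup>2) * indicator {0..2*pi} x \<partial>lborel)
      = (\<integral>\<^sup>+x. ennreal (indicator {0..2*pi} x * ((cmod (F 0 (x + t) - F 0 x))\<^sup>2 / K)) \<partial>lborel)"
    by (intro nn_integral_cong) (simp add: cis_shift_dist K_def norm_minus_commute indicator_def)
  also have "\<dots> = ennreal (I / K)"
    by (rule nn_integral_has_integral_lebesgue[OF _ hI2]) (use K in auto)
  also have "\<dots> = (\<Sum>k. ennreal (2*pi * ((cmod (fc (F 0) (int k)))\<^sup>2 + (cmod (fc (F 0) (- int k)))\<^sup>2)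
                        * ((cmod (E (int k) t - 1))\<^sup>2 / K)))"
  proof -
    have s: "(\<lambda>k. (cmod (E (int k) t - 1))\<^sup>2 * ((cmod (fc (F 0) (int k)))\<^sup>2 + (cmod (fc (F 0) (- int k)))\<^sup>2))
           sums (I / (2*pi))"
      unfolding I_def using shift_parseval[OF F] t by simp
    have "(\<lambda>k. (2*pi / K) * ((cmod (E (int k) t - 1))\<^sup>2 * ((cmod (fc (F 0) (int k)))\<^sup>2 + (cmod (fc (F 0) (- int k)))\<^sup>2)))
           sums ((2*pi / K) * (I / (2*pi)))"
      by (rule sums_mult[OF s])
    then have "(\<lambda>k. 2*pi * ((cmod (fc (F 0) (int k)))\<^sup>2 + (cmod (fc (F 0) (- int k)))\<^sup>2)
                        * ((cmod (E (int k) t - 1))\<^sup>2 / K)) sums (I / K)"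
      by (simp add: field_simps)
    then show ?thesis using K by (intro suminf_ennreal_eq[symmetric]) (auto intro!: mult_nonneg_nonneg divide_nonneg_nonneg)
  qed
  finally show ?thesis unfolding K_def .
qed

lemma H12_formula:
  assumes F: "SP F" and h: "\<And>x. h (cis x) = F 0 x"
  shows "H12_sq h = (\<Sum>k. ennreal (4*pi\<^sup>2 * real k * ((cmod (fc (F 0) (int k)))\<^sup>2 + (cmod (fc (F 0) (- int k)))\<^sup>2)))"
proof -
  have mF [measurable]: "F 0 \<in> borel_measurable borel"
    by (rule borel_measurable_continuous_onI) (rule SP_cont[OF F])
  define \<Phi> where "\<Phi> x y = ennreal ((cmod (F 0 x - F 0 y))\<^sup>2 / (cmod (cis x - cis y))\<^sup>2)" for x y
  have mPhi [measurable]: "\<Phi> x \<in> borel_measurable borel" for x unfolding \<Phi>_def by measurable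
  define C where "C k = (cmod (fc (F 0) (int k)))\<^sup>2 + (cmod (fc (F 0) (- int k)))\<^sup>2" for k
  have "H12_sq h = (\<integral>\<^sup>+x. (\<integral>\<^sup>+y. \<Phi> x y * indicator {0..2*pi} y \<partial>lborel) * indicator {0..2*pi} x \<partial>lborel)"
    unfolding H12_sq_def \<Phi>_def h ..
  also have "\<dots> = (\<integral>\<^sup>+x. (\<integral>\<^sup>+t. \<Phi> x (x + t) * indicator {0..2*pi} t \<partial>lborel) * indicator {0..2*pi} x \<partial>lborel)"
  proof (intro nn_integral_cong)
    fix x :: real
    show "(\<integral>\<^sup>+y. \<Phi> x y * indicator {0..2*pi} y \<partial>lborel) * indicator {0..2*pi} x =
          (\<integral>\<^sup>+t. \<Phi> x (x + t) * indicator {0..2*pi} t \<partial>lborel) * indicator {0..2*pi} x"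
    proof (cases "x \<in> {0..2*pi}")
      case True
      have "\<Phi> x (y + 2*pi) = \<Phi> x y" for y
        unfolding \<Phi>_def using SP_period[OF F, of 0 y] by (simp add: cis_mult[symmetric])
      then show ?thesis using periodic_translate[OF mPhi _ True] by simp
    qed simp
  qed
  also have "\<dots> = (\<integral>\<^sup>+x. (\<integral>\<^sup>+t. \<Phi> x (x + t) * indicator {0..2*pi} t * indicator {0..2*pi} x \<partial>lborel) \<partial>lborel)"
    by (intro nn_integral_cong nn_integral_multc[symmetric]) measurable
  also have "\<dots> = (\<integral>\<^sup>+t. (\<integral>\<^sup>+x. \<Phi> x (x + t) * indicator {0..2*pi} t * indicator {0..2*pi} x \<partial>lborel) \<partial>lborel)"
    by (rule lborel_pair.Fubini'[symmetric]) (unfold \<Phi>_def, measurable)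
  also have "\<dots> = (\<integral>\<^sup>+t. (\<Sum>k. ennreal (2*pi * C k * ((cmod (E (int k) t - 1))\<^sup>2 / (cmod (E 1 t - 1))\<^sup>2))
                                  * indicator {0..2*pi} t) \<partial>lborel)"
  proof (rule nn_integral_cong_AE)
    show "AE t in lborel. (\<integral>\<^sup>+x. \<Phi> x (x + t) * indicator {0..2*pi} t * indicator {0..2*pi} x \<partial>lborel) =
      (\<Sum>k. ennreal (2*pi * C k * ((cmod (E (int k) t - 1))\<^sup>2 / (cmod (E 1 t - 1))\<^sup>2)) * indicator {0..2*pi} t)"
      using AE_lborel_singleton[of 0] AE_lborel_singleton[of "2*pi"]
    proof eventually_elim
      case (elim t)
      show ?case
      proof (cases "t \<in> {0<..<2*pi}")
        case True
        have "(\<integral>\<^sup>+x. \<Phi> x (x + t) * indicator {0..2*pi} t * indicator {0..2*pi} x \<partial>lborel)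
            = (\<integral>\<^sup>+x. \<Phi> x (x + t) * indicator {0..2*pi} x \<partial>lborel)"
          using True by (intro nn_integral_cong) (simp add: indicator_def)
        also have "\<dots> = (\<Sum>k. ennreal (2*pi * C k * ((cmod (E (int k) t - 1))\<^sup>2 / (cmod (E 1 t - 1))\<^sup>2)))"
          using inner_t[OF F True] unfolding \<Phi>_def C_def by simp
        finally have calc: "(\<integral>\<^sup>+x. \<Phi> x (x + t) * indicator {0..2*pi} t * indicator {0..2*pi} x \<partial>lborel)
            = (\<Sum>k. ennreal (2*pi * C k * ((cmod (E (int k) t - 1))\<^sup>2 / (cmod (E 1 t - 1))\<^sup>2)))" .
        have ind1: "indicator {0..2*pi} t = (1::ennreal)" using True by simp
        show ?thesis using calc unfolding ind1 mult_1_right .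
      next
        case False
        then have "t \<notin> {0..2*pi}" using elim by auto
        then have ind0: "indicator {0..2*pi} t = (0::ennreal)" by simp
        show ?thesis unfolding ind0 by simp
      qed
    qed
  qed
  also have "\<dots> = (\<Sum>k. \<integral>\<^sup>+t. ennreal (2*pi * C k * ((cmod (E (int k) t - 1))\<^sup>2 / (cmod (E 1 t - 1))\<^sup>2))
                                  * indicator {0..2*pi} t \<partial>lborel)"
    by (rule nn_integral_suminf) measurable
  also have "\<dots> = (\<Sum>k. ennreal (4*pi\<^sup>2 * real k * C k))"
  proof (intro suminf_cong)
    fix k
    have C0: "C k \<ge> 0" unfolding C_def by simp
    have "(\<integral>\<^sup>+t. ennreal (2*pi * C k * ((cmod (E (int k) t - 1))\<^sup>2 / (cmod (E 1 t - 1))\<^sup>2))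
                                  * indicator {0..2*pi} t \<partial>lborel)
        = (\<integral>\<^sup>+t. ennreal (2*pi * C k) * (ennreal ((cmod (E (int k) t - 1))\<^sup>2 / (cmod (E 1 t - 1))\<^sup>2)
                                  * indicator {0..2*pi} t) \<partial>lborel)"
    proof (intro nn_integral_cong)
      fix t :: real
      have q: "(cmod (E (int k) t - 1))\<^sup>2 / (cmod (E 1 t - 1))\<^sup>2 \<ge> 0" by simp
      have "ennreal (2*pi * C k * ((cmod (E (int k) t - 1))\<^sup>2 / (cmod (E 1 t - 1))\<^sup>2))
          = ennreal (2*pi * C k) * ennreal ((cmod (E (int k) t - 1))\<^sup>2 / (cmod (E 1 t - 1))\<^sup>2)"
        by (rule ennreal_mult[OF _ q]) (use C0 in simp)
      then show "ennreal (2*pi * C k * ((cmod (E (int k) t - 1))\<^sup>2 / (cmod (E 1 t - 1))\<^sup>2)) * indicator {0..2*pi} t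
          = ennreal (2*pi * C k) * (ennreal ((cmod (E (int k) t - 1))\<^sup>2 / (cmod (E 1 t - 1))\<^sup>2) * indicator {0..2*pi} t)"
        by (simp only: mult.assoc)
    qed
    also have "\<dots> = ennreal (2*pi * C k) * ennreal (2*pi*real k)"
      by (subst nn_integral_cmult) (measurable, simp add: fejer)
    also have "\<dots> = ennreal (4*pi\<^sup>2 * real k * C k)"
      using C0 by (simp add: ennreal_mult'[symmetric] power2_eq_square algebra_simps)
    finally show "(\<integral>\<^sup>+t. ennreal (2*pi * C k * ((cmod (E (int k) t - 1))\<^sup>2 / (cmod (E 1 t - 1))\<^sup>2))
                                  * indicator {0..2*pi} t \<partial>lborel) = ennreal (4*pi\<^sup>2 * real k * C k)" .
  qed
  finally show ?thesis unfolding C_def .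
qed

lemma smooth_SP:
  assumes "smooth_S1_map v"
  obtains D where "SP D" "D 0 = (\<lambda>t. v (cis t))" "\<And>t. norm (D 0 t) = 1"
proof -
  from assms obtain D where D: "D 0 = (\<lambda>t. v (cis t))" "\<And>n t. (D n has_vector_derivative D (Suc n) t) (at t)"
    and n: "\<And>t. cmod (v (cis t)) = 1"
    unfolding smooth_S1_map_def smooth_real_def by blast
  have "SP D" unfolding SP_def using D by (simp add: cis_mult[symmetric])
  then show ?thesis using that D n by simp
qed

lemma SP_shift:
  assumes "SP D"
  shows "SP (\<lambda>n t. (\<i> * of_nat m) ^ n * E (int m) t - D n t)"
  unfolding SP_def
proof (intro conjI allI)
  fix n t
  have "((\<lambda>t. (\<i> * of_nat m) ^ n * E (int m) t) has_vector_derivative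
           (\<i> * of_nat m) ^ n * (\<i> * of_int (int m) * E (int m) t)) (at t)"
    by (intro has_vector_derivative_mult_right E_deriv)
  from has_vector_derivative_diff[OF this SP_der[OF assms, of n t UNIV]]
  show "((\<lambda>t. (\<i> * of_nat m) ^ n * E (int m) t - D n t) has_vector_derivative
          (\<i> * of_nat m) ^ Suc n * E (int m) t - D (Suc n) t) (at t)"
    by (simp add: algebra_simps)
next
  fix t
  show "(\<i> * of_nat m) ^ 0 * E (int m) (t + 2 * pi) - D 0 (t + 2 * pi) = (\<i> * of_nat m) ^ 0 * E (int m) t - D 0 t"
    using SP_period[OF assms, of 0 t] by (simp add: E_period)
qed

lemma fc_Em: "fc (E (int m)) n = (if n = int m then 1 else 0)"
proof -
  have "E (int m) = (\<lambda>t. \<Sum>k\<in>{int m}. 1 * E k t)" by auto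
  then show ?thesis using fc_trig[of "{int m}" "\<lambda>_. 1" n] by simp
qed

lemma smooth_case:
  assumes sv: "smooth_S1_map v" and deg: "smooth_degree v = of_int d2"
  shows "ennreal (4*pi\<^sup>2 * real_of_int (d2 - int m)) \<le> H12_sq (\<lambda>z. z ^ m - v z)"
proof -
  obtain D where D: "SP D" "D 0 = (\<lambda>t. v (cis t))" "\<And>t. norm (D 0 t) = 1"
    using smooth_SP[OF sv] by blast
  define F where "F = (\<lambda>n t. (\<i> * of_nat m) ^ n * E (int m) t - D n t)"
  have F: "SP F" unfolding F_def by (rule SP_shift[OF D(1)])
  have F0: "F 0 t = E (int m) t - D 0 t" for t by (simp add: F_def)
  have hF: "(\<lambda>z. z ^ m - v z) (cis x) = F 0 x" for x
    by (simp add: F0 D(2) E_pow) (simp add: E_def)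
  define a where "a = fc (D 0)"
  define c where "c = fc (F 0)"
  have cD: "continuous_on {0..2*pi} (D 0)" by (rule SP_cont[OF D(1)])
  have ca: "c n = (if n = int m then 1 else 0) - a n" for n
  proof -
    have "F 0 = (\<lambda>t. E (int m) t - D 0 t)" using F0 by auto
    then show ?thesis unfolding c_def a_def
      by (simp add: fc_diff[OF continuous_on_E cD] fc_Em)
  qed
  have H: "H12_sq (\<lambda>z. z ^ m - v z) = (\<Sum>k. ennreal (4*pi\<^sup>2 * real k * ((cmod (c (int k)))\<^sup>2 + (cmod (c (- int k)))\<^sup>2)))"
    unfolding c_def by (rule H12_formula[OF F hF])
  have degl: "(\<lambda>N. \<Sum>n\<in>{-int N..int N}. real_of_int n * (cmod (a n))\<^sup>2) \<longlonglongrightarrow> real_of_int d2"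
    unfolding a_def
    by (rule degree_sum[OF D(1) D(3)]) (use deg in \<open>simp add: smooth_degree_def D(2)\<close>)
  define L where "L = real_of_int d2 + real m * ((cmod (1 - a (int m)))\<^sup>2 - (cmod (a (int m)))\<^sup>2)"
  define S where "S N = (\<Sum>n\<in>{-int N..int N}. real_of_int n * (cmod (c n))\<^sup>2)" for N
  have SN: "S N = (\<Sum>n\<in>{-int N..int N}. real_of_int n * (cmod (a n))\<^sup>2)
                 + real m * ((cmod (1 - a (int m)))\<^sup>2 - (cmod (a (int m)))\<^sup>2)" if "m \<le> N" for N
  proof -
    let ?A = "{-int N..int N}"
    have m: "int m \<in> ?A" using that by auto
    have "S N = real m * (cmod (1 - a (int m)))\<^sup>2 + (\<Sum>n\<in>?A - {int m}. real_of_int n * (cmod (c n))\<^sup>2)"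
      unfolding S_def by (subst sum.remove[OF _ m]) (auto simp: ca)
    also have "(\<Sum>n\<in>?A - {int m}. real_of_int n * (cmod (c n))\<^sup>2) = (\<Sum>n\<in>?A - {int m}. real_of_int n * (cmod (a n))\<^sup>2)"
      by (intro sum.cong refl) (auto simp: ca)
    also have "(\<Sum>n\<in>{-int N..int N}. real_of_int n * (cmod (a n))\<^sup>2) =
        real m * (cmod (a (int m)))\<^sup>2 + (\<Sum>n\<in>?A - {int m}. real_of_int n * (cmod (a n))\<^sup>2)"
      by (subst sum.remove[OF _ m]) auto
    ultimately show ?thesis by (simp add: algebra_simps)
  qed
  have Slim: "S \<longlonglongrightarrow> L"
  proof -
    have "(\<lambda>N. (\<Sum>n\<in>{-int N..int N}. real_of_int n * (cmod (a n))\<^sup>2)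
                 + real m * ((cmod (1 - a (int m)))\<^sup>2 - (cmod (a (int m)))\<^sup>2)) \<longlonglongrightarrow> L"
      unfolding L_def by (intro tendsto_add degl tendsto_const)
    moreover have "eventually (\<lambda>N. (\<Sum>n\<in>{-int N..int N}. real_of_int n * (cmod (a n))\<^sup>2)
                 + real m * ((cmod (1 - a (int m)))\<^sup>2 - (cmod (a (int m)))\<^sup>2) = S N) sequentially"
      by (rule eventually_sequentiallyI[of m]) (simp add: SN)
    ultimately show ?thesis by (rule Lim_transform_eventually)
  qed
  have am: "cmod (a (int m)) \<le> 1"
    unfolding a_def by (rule fc_bound[OF cD]) (simp add: D(3))
  have "L \<ge> real_of_int d2 - real m"
  proof -
    have e: "(cmod (1 - a (int m)))\<^sup>2 - (cmod (a (int m)))\<^sup>2 = 1 - 2 * Re (a (int m))"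
      by (simp only: cmod_power2) (simp add: power2_eq_square algebra_simps)
    have "Re (a (int m)) \<le> 1" using abs_Re_le_cmod[of "a (int m)"] am by linarith
    then have "(cmod (1 - a (int m)))\<^sup>2 - (cmod (a (int m)))\<^sup>2 \<ge> -1" unfolding e by linarith
    then have "real m * ((cmod (1 - a (int m)))\<^sup>2 - (cmod (a (int m)))\<^sup>2) \<ge> real m * (-1)"
      by (intro mult_left_mono) auto
    then show ?thesis unfolding L_def by simp
  qed
  have bound: "ennreal (4*pi\<^sup>2 * S N) \<le> H12_sq (\<lambda>z. z ^ m - v z)" for N
  proof -
    define C where "C k = (cmod (c (int k)))\<^sup>2 + (cmod (c (- int k)))\<^sup>2" for k
    have "S N = (\<Sum>k<Suc N. real_of_int (int k) * (cmod (c (int k)))\<^sup>2 + real_of_int (- int k) * (cmod (c (- int k)))\<^sup>2)"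
      unfolding S_def by (rule sym_to_nat) simp
    also have "\<dots> \<le> (\<Sum>k<Suc N. real k * C k)"
      unfolding C_def by (intro sum_mono) (simp add: algebra_simps)
    finally have "4*pi\<^sup>2 * S N \<le> 4*pi\<^sup>2 * (\<Sum>k<Suc N. real k * C k)"
      by (intro mult_left_mono) auto
    moreover have "4*pi\<^sup>2 * (\<Sum>k<Suc N. real k * C k) = (\<Sum>k<Suc N. 4*pi\<^sup>2 * real k * C k)"
      by (subst sum_distrib_left) (simp only: mult.assoc)
    ultimately have "4*pi\<^sup>2 * S N \<le> (\<Sum>k<Suc N. 4*pi\<^sup>2 * real k * C k)"
      by (rule ord_le_eq_trans)
    then have "ennreal (4*pi\<^sup>2 * S N) \<le> ennreal (\<Sum>k<Suc N. 4*pi\<^sup>2 * real k * C k)"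
      by (rule ennreal_leI)
    also have "\<dots> = (\<Sum>k<Suc N. ennreal (4*pi\<^sup>2 * real k * C k))"
      by (rule sum_ennreal[symmetric]) (simp add: C_def)
    also have "\<dots> \<le> (\<Sum>k. ennreal (4*pi\<^sup>2 * real k * C k))"
      by (rule sum_le_suminf) auto
    finally show ?thesis unfolding H C_def .
  qed
  have "(\<lambda>N. ennreal (4*pi\<^sup>2 * S N)) \<longlonglongrightarrow> ennreal (4*pi\<^sup>2 * L)"
    by (intro tendsto_ennrealI tendsto_mult_left Slim)
  then have "ennreal (4*pi\<^sup>2 * L) \<le> H12_sq (\<lambda>z. z ^ m - v z)"
    by (rule LIMSEQ_le_const2) (use bound in auto)
  moreover have "ennreal (4*pi\<^sup>2 * real_of_int (d2 - int m)) \<le> ennreal (4*pi\<^sup>2 * L)"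
    using \<open>L \<ge> _\<close> by (intro ennreal_leI mult_left_mono) auto
  ultimately show ?thesis by (rule order_trans[rotated])
qed

lemma l1: fixes a b e :: real assumes e: "e > 0"
  shows "2 * a * b \<le> e * a\<^sup>2 + b\<^sup>2 / e"
proof -
  have h: "e * (e * a\<^sup>2 + b\<^sup>2 / e - 2 * a * b) = (e * a - b)\<^sup>2"
    using e by (simp add: power2_eq_square algebra_simps)
  have "0 \<le> e * (e * a\<^sup>2 + b\<^sup>2 / e - 2 * a * b)" unfolding h by simp
  then have "0 \<le> e * a\<^sup>2 + b\<^sup>2 / e - 2 * a * b" using e by (simp add: zero_le_mult_iff)
  then show ?thesis by simp
qed

lemma l2: fixes a b e :: real assumes e: "e > 0"
  shows "(a + b)\<^sup>2 \<le> (1 + e) * a\<^sup>2 + (1 + 1/e) * b\<^sup>2"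
proof -
  have "(1 + e) * a\<^sup>2 + (1 + 1/e) * b\<^sup>2 - (a + b)\<^sup>2 = e * a\<^sup>2 + b\<^sup>2 / e - 2 * a * b"
    by (simp add: power2_eq_square algebra_simps)
  then show ?thesis using l1[OF e, of a b] by simp
qed

lemma pw_ineq:
  fixes A B :: complex
  assumes e: "e > 0"
  shows "(cmod (A + B))\<^sup>2 \<le> (1 + e) * (cmod A)\<^sup>2 + (1 + 1/e) * (cmod B)\<^sup>2"
proof -
  have "cmod (A + B) \<le> cmod A + cmod B" by (rule norm_triangle_ineq)
  then have "(cmod (A + B))\<^sup>2 \<le> (cmod A + cmod B)\<^sup>2" by (intro power_mono) auto
  also have "\<dots> \<le> (1 + e) * (cmod A)\<^sup>2 + (1 + 1/e) * (cmod B)\<^sup>2" by (rule l2[OF e])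
  finally show ?thesis .
qed

lemma ennreal_pw:
  assumes e: "e > 0" and "K \<ge> 0"
  shows "ennreal ((cmod (A + B))\<^sup>2 / K) \<le> ennreal (1 + e) * ennreal ((cmod A)\<^sup>2 / K) + ennreal (1 + 1/e) * ennreal ((cmod B)\<^sup>2 / K)"
proof -
  have "(cmod (A + B))\<^sup>2 / K \<le> ((1 + e) * (cmod A)\<^sup>2 + (1 + 1/e) * (cmod B)\<^sup>2) / K"
    by (rule divide_right_mono[OF pw_ineq[OF e] assms(2)])
  also have "\<dots> = (1 + e) * ((cmod A)\<^sup>2 / K) + (1 + 1/e) * ((cmod B)\<^sup>2 / K)"
    by (simp add: add_divide_distrib)
  finally have "ennreal ((cmod (A + B))\<^sup>2 / K) \<le> ennreal ((1 + e) * ((cmod A)\<^sup>2 / K) + (1 + 1/e) * ((cmod B)\<^sup>2 / K))"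
    by (rule ennreal_leI)
  also have "\<dots> = ennreal ((1 + e) * ((cmod A)\<^sup>2 / K)) + ennreal ((1 + 1/e) * ((cmod B)\<^sup>2 / K))"
    by (rule ennreal_plus) (use e assms(2) in simp_all)
  also have "\<dots> = ennreal (1 + e) * ennreal ((cmod A)\<^sup>2 / K) + ennreal (1 + 1/e) * ennreal ((cmod B)\<^sup>2 / K)"
    using e assms(2) by (simp only: ennreal_mult divide_nonneg_nonneg zero_le_power2 order_less_imp_le
        add_nonneg_nonneg zero_le_one zero_le_divide_1_iff)
  finally show ?thesis .
qed

lemma H12_split:
  assumes [measurable]: "(\<lambda>x. p (cis x)) \<in> borel_measurable borel" "(\<lambda>x. q (cis x)) \<in> borel_measurable borel"
    and e: "e > 0"
  shows "H12_sq (\<lambda>z. p z + q z) \<le> ennreal (1 + e) * H12_sq p + ennreal (1 + 1/e) * H12_sq q"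
proof -
  define P where "P x y = ennreal ((cmod (p (cis x) - p (cis y)))\<^sup>2 / (cmod (cis x - cis y))\<^sup>2)" for x y
  define Q where "Q x y = ennreal ((cmod (q (cis x) - q (cis y)))\<^sup>2 / (cmod (cis x - cis y))\<^sup>2)" for x y
  define R where "R x y = ennreal ((cmod ((p (cis x) + q (cis x)) - (p (cis y) + q (cis y))))\<^sup>2 / (cmod (cis x - cis y))\<^sup>2)" for x y
  have [measurable]: "(\<lambda>(x, y). P x y) \<in> borel_measurable (borel \<Otimes>\<^sub>M borel)" unfolding P_def by measurable
  have [measurable]: "(\<lambda>(x, y). Q x y) \<in> borel_measurable (borel \<Otimes>\<^sub>M borel)" unfolding Q_def by measurable
  have [measurable]: "P x \<in> borel_measurable borel" "Q x \<in> borel_measurable borel" for x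
    unfolding P_def Q_def by measurable
  let ?c1 = "ennreal (1 + e)" and ?c2 = "ennreal (1 + 1/e)"
  have pw: "R x y \<le> ?c1 * P x y + ?c2 * Q x y" for x y
  proof -
    have "(p (cis x) + q (cis x)) - (p (cis y) + q (cis y)) = (p (cis x) - p (cis y)) + (q (cis x) - q (cis y))"
      by simp
    then show ?thesis unfolding R_def P_def Q_def by (simp only:) (rule ennreal_pw[OF e], simp)
  qed
  have inner: "(\<integral>\<^sup>+y. R x y * indicator {0..2*pi} y \<partial>lborel) \<le>
      ?c1 * (\<integral>\<^sup>+y. P x y * indicator {0..2*pi} y \<partial>lborel) + ?c2 * (\<integral>\<^sup>+y. Q x y * indicator {0..2*pi} y \<partial>lborel)" for x
  proof -
    have "(\<integral>\<^sup>+y. R x y * indicator {0..2*pi} y \<partial>lborel) \<le>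
        (\<integral>\<^sup>+y. ?c1 * (P x y * indicator {0..2*pi} y) + ?c2 * (Q x y * indicator {0..2*pi} y) \<partial>lborel)"
      by (intro nn_integral_mono) (auto simp: indicator_def pw)
    also have "\<dots> = ?c1 * (\<integral>\<^sup>+y. P x y * indicator {0..2*pi} y \<partial>lborel) + ?c2 * (\<integral>\<^sup>+y. Q x y * indicator {0..2*pi} y \<partial>lborel)"
      by (simp add: nn_integral_add nn_integral_cmult)
    finally show ?thesis .
  qed
  have "H12_sq (\<lambda>z. p z + q z) = (\<integral>\<^sup>+x. (\<integral>\<^sup>+y. R x y * indicator {0..2*pi} y \<partial>lborel) * indicator {0..2*pi} x \<partial>lborel)"
    unfolding H12_sq_def R_def ..
  also have "\<dots> \<le> (\<integral>\<^sup>+x. ?c1 * ((\<integral>\<^sup>+y. P x y * indicator {0..2*pi} y \<partial>lborel) * indicator {0..2*pi} x)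
        + ?c2 * ((\<integral>\<^sup>+y. Q x y * indicator {0..2*pi} y \<partial>lborel) * indicator {0..2*pi} x) \<partial>lborel)"
  proof (intro nn_integral_mono)
    fix x
    show "(\<integral>\<^sup>+y. R x y * indicator {0..2*pi} y \<partial>lborel) * indicator {0..2*pi} x \<le>
        ?c1 * ((\<integral>\<^sup>+y. P x y * indicator {0..2*pi} y \<partial>lborel) * indicator {0..2*pi} x)
        + ?c2 * ((\<integral>\<^sup>+y. Q x y * indicator {0..2*pi} y \<partial>lborel) * indicator {0..2*pi} x)"
    proof (cases "x \<in> {0..2*pi}")
      case True
      then have i: "indicator {0..2*pi} x = (1::ennreal)" by simp
      show ?thesis unfolding i mult_1_right by (rule inner)
    next
      case False
      then have i: "indicator {0..2*pi} x = (0::ennreal)" by simp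
      show ?thesis unfolding i by simp
    qed
  qed
  also have "\<dots> = ?c1 * H12_sq p + ?c2 * H12_sq q"
    unfolding H12_sq_def P_def Q_def
    by (simp add: nn_integral_add nn_integral_cmult)
  finally show ?thesis .
qed

lemma H12_sym: "H12_sq (\<lambda>z. g z - v z) = H12_sq (\<lambda>z. v z - g z)"
proof -
  have "cmod ((g x - v x) - (g y - v y)) = cmod ((v x - g x) - (v y - g y))" for x y :: complex
  proof -
    have "(g x - v x) - (g y - v y) = - ((v x - g x) - (v y - g y))" by simp
    then show ?thesis by (simp only: norm_minus_cancel)
  qed
  then show ?thesis unfolding H12_sq_def by simp
qed

lemma smooth_meas:
  assumes "smooth_S1_map v"
  shows "(\<lambda>x. v (cis x)) \<in> borel_measurable borel"
proof -
  obtain D where D: "SP D" "D 0 = (\<lambda>t. v (cis t))" "\<And>t. norm (D 0 t) = 1"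
    using smooth_SP[OF assms] by blast
  have "D 0 \<in> borel_measurable borel"
    by (rule borel_measurable_continuous_onI) (rule SP_cont[OF D(1)])
  then show ?thesis using D(2) by simp
qed

lemma ennreal_eps:
  assumes "\<And>e. e > 0 \<Longrightarrow> ennreal c \<le> ennreal (1 + e) * X" "c \<ge> 0"
  shows "ennreal c \<le> X"
proof (cases "X = top")
  case True then show ?thesis by simp
next
  case False
  then obtain x where x: "X = ennreal x" "x \<ge> 0" by (cases X) auto
  have "c \<le> x + e" if e: "e > 0" for e
  proof -
    define e' where "e' = e / (x + 1)"
    have e': "e' > 0" unfolding e'_def using e x by simp
    have "ennreal c \<le> ennreal ((1 + e') * x)"
      using assms(1)[OF e'] x e' by (simp add: ennreal_mult)
    then have "c \<le> (1 + e') * x" using x e' by (simp add: ennreal_le_iff)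
    also have "(1 + e') * x = x + e * (x / (x + 1))" unfolding e'_def by (simp add: field_simps)
    also have "e * (x / (x + 1)) \<le> e * 1"
      using x e by (intro mult_left_mono) auto
    finally show ?thesis by simp
  qed
  then have "c \<le> x" by (rule field_le_epsilon)
  then show ?thesis using x by (simp add: ennreal_leI)
qed

theorem proposition6p1:
  fixes d1 d2 :: int and g :: "complex \<Rightarrow> complex"
  assumes "0 \<le> d1" and "d1 < d2"
    and "g \<in> E_deg d2"
  shows "ennreal (4 * pi\<^sup>2 * real_of_int (d2 - d1)) \<le> H12_sq (\<lambda>z. z ^ nat d1 - g z)"
proof -
  from assms(3) have gH: "in_H12 g" and gd: "H12_degree g d2"
    unfolding E_deg_def in_H12_S1_def by auto
  have gm [measurable]: "(\<lambda>x. g (cis x)) \<in> borel_measurable borel"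
    using gH unfolding in_H12_def by simp
  obtain v where v: "\<And>n. smooth_S1_map (v n)" "\<And>n. smooth_degree (v n) = of_int d2"
    and lim: "(\<lambda>n. H12_sq (\<lambda>z. v n z - g z)) \<longlonglongrightarrow> 0"
    using gd unfolding H12_degree_def by blast
  define m where "m = nat d1"
  have dm: "d1 = int m" unfolding m_def using assms(1) by simp
  define c where "c = 4 * pi\<^sup>2 * real_of_int (d2 - d1)"
  have c0: "c \<ge> 0" unfolding c_def using assms(2) by simp
  let ?X = "H12_sq (\<lambda>z. z ^ m - g z)"
  have "ennreal c \<le> ennreal (1 + e) * ?X" if e: "e > 0" for e
  proof -
    have bnd: "ennreal c \<le> ennreal (1 + e) * ?X + ennreal (1 + 1/e) * H12_sq (\<lambda>z. v n z - g z)" for n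
    proof -
      have "ennreal c \<le> H12_sq (\<lambda>z. z ^ m - v n z)"
        unfolding c_def dm by (rule smooth_case[OF v(1) v(2)])
      also have "(\<lambda>z. z ^ m - v n z) = (\<lambda>z. (z ^ m - g z) + (g z - v n z))" by auto
      also have "H12_sq \<dots> \<le> ennreal (1 + e) * ?X + ennreal (1 + 1/e) * H12_sq (\<lambda>z. g z - v n z)"
      proof (rule H12_split[OF _ _ e])
        show "(\<lambda>x. cis x ^ m - g (cis x)) \<in> borel_measurable borel" by measurable
        have [measurable]: "(\<lambda>x. v n (cis x)) \<in> borel_measurable borel" by (rule smooth_meas[OF v(1)])
        show "(\<lambda>x. g (cis x) - v n (cis x)) \<in> borel_measurable borel" by measurable
      qed
      finally show ?thesis by (simp only: H12_sym)
    qed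
    have "(\<lambda>n. ennreal (1 + e) * ?X + ennreal (1 + 1/e) * H12_sq (\<lambda>z. v n z - g z))
        \<longlonglongrightarrow> ennreal (1 + e) * ?X + ennreal (1 + 1/e) * 0"
      by (intro tendsto_add tendsto_const ennreal_tendsto_cmult lim) simp
    then have "(\<lambda>n. ennreal (1 + e) * ?X + ennreal (1 + 1/e) * H12_sq (\<lambda>z. v n z - g z))
        \<longlonglongrightarrow> ennreal (1 + e) * ?X" by simp
    then show ?thesis by (rule LIMSEQ_le_const) (use bnd in auto)
  qed
  then have "ennreal c \<le> ?X" using c0 by (rule ennreal_eps)
  then show ?thesis unfolding c_def m_def .
qed

end
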